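(* There exists a group homomorphism $\tau:\mathrm{SL}(2,\mathbf Z)\to\mathcal A^\times$ with the following properties. (a) Letting $E_i$ be the subspace of $E$ spanned by $e_1,\dots,e_{2i}$ ($i\ge0$), the chain $0=E_0\subset E_1\subset E_2\subset\cdots$ is a filtration by $\mathbf C\,\mathrm{SL}(2,\mathbf Z)$-submodules (with $Y$ acting by $\tau(Y)$), and for each $i\in\mathbf N$ the quotient $E_i/E_{i-1}$ is isomorphic to the standard $2$-dimensional $\mathbf C\,\mathrm{SL}(2,\mathbf Z)$-module. (b) $\tau(T)=J_\infty$. (c) $\tau(Y)$ is an integer matrix for every $Y\in\mathrm{SL}(2,\mathbf Z)$. (d) There is a constant $C$ such that $|\tau(S)_{i,j}|\le 2^{Cj}$ for all $i,j\in\mathbf N$.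
   Context: $\mathbf N=\{1,2,\dots\}$. $E$ is the complex vector space with basis $\{e_n\}_{n\in\mathbf N}$; $\mathcal A$ is the ring of $\mathbf N\times\mathbf N$ complex matrices with finitely many nonzero entries in each column, acting on $E$ on the left in this basis. $S=\begin{pmatrix}0&-1\\1&0\end{pmatrix}$, $T=\begin{pmatrix}1&1\\0&1\end{pmatrix}$. $J_\infty$ is the matrix with $(J_\infty)_{i,j}=1$ if $j=i$ or $j=i+1$, and $0$ otherwise. *)

theory Defs
  imports "HOL-Analysis.Analysis"
begin

text \<open>Matrices in the basis (e_n), n in N = {1,2,...}: functions nat => nat => complex,
  row index first; index 0 is unused (entries with a zero index are required to vanish).\<close>
type_synonym mat = "nat \<Rightarrow> nat \<Rightarrow> complex"
type_synonym vect = "nat \<Rightarrow> complex"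

definition ringA :: "mat set" where
  "ringA = {M. (\<forall>i j. (i = 0 \<or> j = 0) \<longrightarrow> M i j = 0) \<and> (\<forall>j. finite {i. M i j \<noteq> 0})}"

definition mat_mult :: "mat \<Rightarrow> mat \<Rightarrow> mat" (infixl "\<star>" 70) where
  "(M \<star> N) i j = (\<Sum>k\<in>{k. N k j \<noteq> 0}. M i k * N k j)"

definition mat_id :: mat where
  "mat_id i j = (if i = j \<and> i \<ge> 1 then 1 else 0)"

definition unitsA :: "mat set" where
  "unitsA = {M \<in> ringA. \<exists>N\<in>ringA. M \<star> N = mat_id \<and> N \<star> M = mat_id}"

definition spaceE :: "vect set" where
  "spaceE = {v. v 0 = 0 \<and> finite {n. v n \<noteq> 0}}"

definition mat_act :: "mat \<Rightarrow> vect \<Rightarrow> vect" where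
  "mat_act M v i = (\<Sum>k\<in>{k. v k \<noteq> 0}. M i k * v k)"

definition filtE :: "nat \<Rightarrow> vect set" where
  "filtE i = {v \<in> spaceE. \<forall>n. n > 2 * i \<longrightarrow> v n = 0}"

definition SL2Z :: "(int^2^2) set" where
  "SL2Z = {X. det X = 1}"

definition matS :: "int^2^2" where
  "matS = vector [vector [0, -1], vector [1, 0]]"

definition matT :: "int^2^2" where
  "matT = vector [vector [1, 1], vector [0, 1]]"

definition J_inf :: mat where
  "J_inf i j = (if i \<ge> 1 \<and> (j = i \<or> j = i + 1) then 1 else 0)"

definition std_act :: "int^2^2 \<Rightarrow> complex^2 \<Rightarrow> complex^2" where
  "std_act Y w = (\<chi> i j. of_int (Y $ i $ j)) *v w"

end

theory Submission
  imports Defs "HOL-Computational_Algebra.Formal_Power_Series"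
begin


datatype m2 = M2 (e11: "int fps") (e12: "int fps") (e21: "int fps") (e22: "int fps")

instantiation m2 :: ring_1
begin
definition "0 = M2 0 0 0 0"
definition "1 = M2 1 0 0 1"
definition "A + B = M2 (e11 A + e11 B) (e12 A + e12 B) (e21 A + e21 B) (e22 A + e22 B)"
definition "A - B = M2 (e11 A - e11 B) (e12 A - e12 B) (e21 A - e21 B) (e22 A - e22 B)"
definition "- A = M2 (- e11 A) (- e12 A) (- e21 A) (- e22 A)"
definition "A * B = M2 (e11 A * e11 B + e12 A * e21 B) (e11 A * e12 B + e12 A * e22 B)
                       (e21 A * e11 B + e22 A * e21 B) (e21 A * e12 B + e22 A * e22 B)"
instance
  by standard (auto simp: zero_m2_def one_m2_def plus_m2_def minus_m2_def uminus_m2_def times_m2_def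
      algebra_simps)
end

lemma m2_eqI: "e11 A = e11 B \<Longrightarrow> e12 A = e12 B \<Longrightarrow> e21 A = e21 B \<Longrightarrow> e22 A = e22 B \<Longrightarrow> A = B"
  by (cases A; cases B) auto

lemma m2_sel[simp]:
  "e11 (A * B) = e11 A * e11 B + e12 A * e21 B" "e12 (A * B) = e11 A * e12 B + e12 A * e22 B"
  "e21 (A * B) = e21 A * e11 B + e22 A * e21 B" "e22 (A * B) = e21 A * e12 B + e22 A * e22 B"
  "e11 (A + B) = e11 A + e11 B" "e12 (A + B) = e12 A + e12 B" "e21 (A + B) = e21 A + e21 B" "e22 (A + B) = e22 A + e22 B"
  "e11 (A - B) = e11 A - e11 B" "e12 (A - B) = e12 A - e12 B" "e21 (A - B) = e21 A - e21 B" "e22 (A - B) = e22 A - e22 B"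
  "e11 (- A) = - e11 A" "e12 (- A) = - e12 A" "e21 (- A) = - e21 A" "e22 (- A) = - e22 A"
  "e11 1 = 1" "e12 1 = 0" "e21 1 = 0" "e22 1 = 1"
  "e11 0 = 0" "e12 0 = 0" "e21 0 = 0" "e22 0 = 0"
  by (simp_all add: times_m2_def plus_m2_def minus_m2_def uminus_m2_def one_m2_def zero_m2_def)



abbreviation XX :: "int fps" where "XX \<equiv> fps_X"

fun catc :: "nat \<Rightarrow> int" where
  "catc 0 = -1"
| "catc (Suc n) = (\<Sum>i\<le>n. catc i * catc (n - i))"

definition cc :: "int fps" where "cc = Abs_fps catc"
definition bb :: "int fps" where "bb = 1 - XX * cc"

lemma cc_rel: "cc = -1 + XX * (cc * cc)"
proof (rule fps_ext)
  fix n show "fps_nth cc n = fps_nth (-1 + XX * (cc * cc)) n"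
  proof (cases n)
    case 0 then show ?thesis by (simp add: cc_def)
  next
    case (Suc m)
    have "fps_nth (XX * (cc * cc)) (Suc m) = fps_nth (cc * cc) m" by simp
    also have "\<dots> = (\<Sum>i\<le>m. catc i * catc (m - i))"
      by (simp only: fps_mult_nth atLeast0AtMost cc_def fps_nth_Abs_fps)
    finally show ?thesis using Suc by (simp add: cc_def)
  qed
qed

lemma bbcc: "bb * cc = -1"
proof -
  have "bb * cc = cc - XX * (cc * cc)" by (simp add: bb_def algebra_simps)
  also have "\<dots> = -1" using cc_rel by (metis add_diff_cancel_right')
  finally show ?thesis .
qed

definition sM :: m2 where "sM = M2 0 bb cc 0"
definition tM :: m2 where "tM = M2 1 XX 1 (1 + XX)"
definition tiM :: m2 where "tiM = M2 (1 + XX) (- XX) (-1) 1"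

lemma ss: "sM * sM = -1"
  by (rule m2_eqI) (simp_all add: sM_def bbcc mult.commute[of cc bb])

lemma tti: "tM * tiM = 1" and tit: "tiM * tM = 1"
  by (rule m2_eqI; simp add: tM_def tiM_def algebra_simps)+

lemma alg4:
  fixes b c x :: "'a::comm_ring_1"
  assumes r1: "b * c = -1" and r2: "b + c * x = 1"
  shows "b * b + b * (1 + x) * c = b - 1"
    and "b * (b * (1 + x)) + b * (1 + x) * (c * x) = b * (1 + x)"
    and "c * b + c * x * c = c"
    and "c * (b * (1 + x)) + c * x * (c * x) = c * x - 1"
proof -
  have e: "b = 1 - c * x" using r2 by (simp add: algebra_simps)
  have "b * b + b * (1 + x) * c = b * (b + c * x) + b * c" by (simp add: algebra_simps)
  then show "b * b + b * (1 + x) * c = b - 1" using r1 r2 by simp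
  have "b * (b * (1 + x)) + b * (1 + x) * (c * x) = b * (1 + x) * (b + c * x)" by (simp add: algebra_simps)
  then show "b * (b * (1 + x)) + b * (1 + x) * (c * x) = b * (1 + x)" using r2 by simp
  have "c * b + c * x * c = c * (b + c * x)" by (simp add: algebra_simps)
  then show "c * b + c * x * c = c" using r2 by simp
  have "c * (b * (1 + x)) + c * x * (c * x) = c * b + c * x * (b + c * x)" by (simp add: algebra_simps)
  then show "c * (b * (1 + x)) + c * x * (c * x) = c * x - 1" using r1 r2 by (simp add: mult.commute)
qed

lemma UU: "(sM * tM) * (sM * tM) = sM * tM - 1"
proof -
  have r1: "bb * cc = -1" by (rule bbcc)
  have r2: "bb + cc * XX = 1" by (simp add: bb_def algebra_simps)
  note a = alg4[OF r1 r2]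
  show ?thesis
    by (rule m2_eqI) (simp_all add: sM_def tM_def a)
qed

lemma U3: "(sM * tM) * (sM * tM) * (sM * tM) = -1"
proof -
  have "(sM * tM) * (sM * tM) * (sM * tM) = (sM * tM - 1) * (sM * tM)" by (simp only: UU)
  also have "\<dots> = (sM * tM) * (sM * tM) - sM * tM" by (simp add: algebra_simps)
  also have "\<dots> = -1" by (simp add: UU)
  finally show ?thesis .
qed

lemma tstst: "tM * sM * tM * sM * tM = sM"
proof -
  have "sM * (tM * sM * tM * sM * tM) = sM * sM"
    using U3 ss by (simp only: mult.assoc)
  then have "(- sM) * (sM * (tM * sM * tM * sM * tM)) = (- sM) * (sM * sM)" by simp
  then show ?thesis using ss by (simp add: mult.assoc[symmetric])
qed



definition mk :: "int \<Rightarrow> int \<Rightarrow> int \<Rightarrow> int \<Rightarrow> int^2^2" where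
  "mk a b c d = vector [vector [a, b], vector [c, d]]"

lemma mk_nth[simp]: "mk a b c d $ 1 $ 1 = a" "mk a b c d $ 1 $ 2 = b" "mk a b c d $ 2 $ 1 = c" "mk a b c d $ 2 $ 2 = d"
  by (simp_all add: mk_def)

lemma mk_eta: "Y = mk (Y$1$1) (Y$1$2) (Y$2$1) (Y$2$2)"
  by (simp add: vec_eq_iff forall_2)

lemma mk_eq_iff: "mk a b c d = mk a' b' c' d' \<longleftrightarrow> a = a' \<and> b = b' \<and> c = c' \<and> d = d'"
  by (metis mk_nth)

lemma mk_mult: "mk a b c d ** mk a' b' c' d' = mk (a*a' + b*c') (a*b' + b*d') (c*a' + d*c') (c*b' + d*d')"
  by (simp add: vec_eq_iff forall_2 matrix_matrix_mult_def sum_2)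

lemma mk_neg: "- mk a b c d = mk (-a) (-b) (-c) (-d)"
  by (simp add: vec_eq_iff forall_2)

lemma mk_det: "det (mk a b c d) = a * d - b * c"
  by (simp add: det_2)

definition tpow :: "int \<Rightarrow> m2" where
  "tpow q = (if 0 \<le> q then tM ^ nat q else tiM ^ nat (- q))"

lemma tpow_0[simp]: "tpow 0 = 1" by (simp add: tpow_def)

lemma tpow_suc: "tpow (q + 1) = tM * tpow q"
proof (cases "0 \<le> q")
  case True
  then have "nat (q + 1) = Suc (nat q)" by simp
  then show ?thesis using True by (simp add: tpow_def)
next
  case False
  show ?thesis
  proof (cases "q = -1")
    case True then show ?thesis by (simp add: tpow_def tti)
  next
    case F2: False
    with False have "nat (- q) = Suc (nat (- q - 1))" "\<not> 0 \<le> q + 1" by simp_all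
    then have "tpow q = tiM * tpow (q + 1)" by (simp add: tpow_def)
    then show ?thesis by (simp add: mult.assoc[symmetric] tti)
  qed
qed

lemma tpow_pred: "tpow (q - 1) = tiM * tpow q"
proof -
  have "tpow q = tM * tpow (q - 1)" using tpow_suc[of "q - 1"] by simp
  then have "tiM * tpow q = tiM * tM * tpow (q - 1)" by (simp add: mult.assoc)
  then show ?thesis by (simp add: tit)
qed

lemma tpow_1[simp]: "tpow 1 = tM" using tpow_suc[of 0] by simp

definition redm :: "int^2^2 \<Rightarrow> int^2^2" where
  "redm Y = mk (Y$2$1) (Y$2$2) (- (Y$1$1 mod Y$2$1)) (- (Y$1$2 - (Y$1$1 div Y$2$1) * Y$2$2))"

function f :: "int^2^2 \<Rightarrow> m2" where
  "f Y = (if Y$2$1 = 0 then (if Y$1$1 = 1 then tpow (Y$1$2) else - tpow (- Y$1$2))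
          else tpow (Y$1$1 div Y$2$1) * sM * f (redm Y))"
  by auto
termination
  by (relation "Wellfounded.measure (\<lambda>Y. nat \<bar>Y$2$1\<bar>)") (auto simp: redm_def abs_mod_less)

declare f.simps[simp del]

lemma f_c0: "Y$2$1 = 0 \<Longrightarrow> f Y = (if Y$1$1 = 1 then tpow (Y$1$2) else - tpow (- Y$1$2))"
  by (subst f.simps) simp

lemma f_cne: "Y$2$1 \<noteq> 0 \<Longrightarrow> f Y = tpow (Y$1$1 div Y$2$1) * sM * f (redm Y)"
  by (subst f.simps) simp

lemma det_redm: "det (redm Y) = det Y"
proof -
  obtain a b c d where Y: "Y = mk a b c d" using mk_eta by blast
  have e: "a mod c = a - (a div c) * c" by (simp add: minus_div_mult_eq_mod)
  show ?thesis unfolding Y redm_def mk_det mk_nth e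
    by (simp add: algebra_simps)
qed

lemma det1_c0: "det (Y::int^2^2) = 1 \<Longrightarrow> Y$2$1 = 0 \<Longrightarrow> (Y$1$1 = 1 \<and> Y$2$2 = 1) \<or> (Y$1$1 = -1 \<and> Y$2$2 = -1)"
proof -
  assume "det Y = 1" "Y$2$1 = 0"
  then have "Y$1$1 * Y$2$2 = 1" by (simp add: det_2)
  then show ?thesis using zmult_eq_1_iff by blast
qed

lemma matT: "matT = mk 1 1 0 1" by (simp add: matT_def mk_def)
lemma matS: "matS = mk 0 (-1) 1 0" by (simp add: matS_def mk_def)

lemma f_T: assumes "det Y = 1" shows "f (mk 1 1 0 1 ** Y) = tM * f Y"
proof -
  obtain a b c d where Y: "Y = mk a b c d" using mk_eta by blast
  have TY: "mk 1 1 0 1 ** Y = mk (a + c) (b + d) c d" by (simp add: Y mk_mult)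
  show ?thesis
  proof (cases "c = 0")
    case True
    then have "(a = 1 \<and> d = 1) \<or> (a = -1 \<and> d = -1)" using det1_c0[OF assms] Y by simp
    then show ?thesis
    proof
      assume "a = 1 \<and> d = 1"
      then show ?thesis using True unfolding TY by (simp add: Y f_c0 tpow_suc[symmetric] add.commute)
    next
      assume "a = -1 \<and> d = -1"
      moreover have "tpow (1 - b) = tM * tpow (- b)" using tpow_suc[of "- b"] by (simp add: algebra_simps)
      ultimately show ?thesis using True unfolding TY
        by (simp add: Y f_c0 algebra_simps)
    qed
  next
    case False
    have q: "(a + c) div c = a div c + 1" "(a + c) mod c = a mod c" using False by simp_all
    have r: "redm (mk (a + c) (b + d) c d) = redm Y"
      by (simp add: redm_def Y q algebra_simps)
    show ?thesis using False
      unfolding TY by (simp add: f_cne Y r q tpow_suc mult.assoc)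
  qed
qed



lemma det_mk_mult: "det (mk a b c d ** Y) = det (mk a b c d) * det Y"
  by (rule det_mul)

lemma mkI_mult: "mk 1 0 0 1 ** (Y::int^2^2) = Y"
proof -
  have "mk 1 0 0 1 ** mk (Y$1$1) (Y$1$2) (Y$2$1) (Y$2$2) = mk (Y$1$1) (Y$1$2) (Y$2$1) (Y$2$2)"
    by (simp add: mk_mult)
  then show ?thesis by (simp only: mk_eta[symmetric])
qed

lemma det_neg2: "det (- (M::int^2^2)) = det M"
  by (simp add: det_2)

lemma f_Tq: assumes "det Y = 1" shows "f (mk 1 q 0 1 ** Y) = tpow q * f Y"
proof (induction q rule: int_induct[where k=0])
  case base then show ?case by (simp add: mkI_mult)
next
  case (step1 i)
  have e: "mk 1 (i + 1) 0 1 ** Y = mk 1 1 0 1 ** (mk 1 i 0 1 ** Y)"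
    by (simp add: matrix_mul_assoc mk_mult)
  have d: "det (mk 1 i 0 1 ** Y) = 1" by (simp add: det_mul mk_det assms)
  show ?case unfolding e f_T[OF d] step1(2) tpow_suc by (simp add: mult.assoc)
next
  case (step2 i)
  let ?Z = "mk 1 (i - 1) 0 1 ** Y"
  have e: "mk 1 i 0 1 ** Y = mk 1 1 0 1 ** ?Z"
    by (simp add: matrix_mul_assoc mk_mult)
  have d: "det ?Z = 1" by (simp add: det_mul mk_det assms)
  have "tpow i * f Y = tM * f ?Z" using step2(2) e f_T[OF d] by simp
  then have "tiM * (tpow i * f Y) = f ?Z" by (simp add: mult.assoc[symmetric] tit)
  then show ?case by (simp add: tpow_pred mult.assoc)
qed

lemma f_neg: "det Y = 1 \<Longrightarrow> f (- Y) = - f Y"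
proof (induction Y rule: f.induct)
  case (1 Y)
  obtain a b c d where Y: "Y = mk a b c d" using mk_eta by blast
  show ?case
  proof (cases "c = 0")
    case True
    then have "(a = 1 \<and> d = 1) \<or> (a = -1 \<and> d = -1)" using det1_c0[OF "1.prems"] Y by simp
    then show ?thesis using True by (auto simp: Y mk_neg f_c0)
  next
    case False
    have r: "redm (- Y) = - redm Y" by (simp add: Y mk_neg redm_def algebra_simps)
    have "f (redm (- Y)) = - f (redm Y)" unfolding r
      using "1.IH" "1.prems" False Y det_redm by simp
    then show ?thesis using False by (simp add: Y mk_neg f_cne)
  qed
qed

lemma grp1: "- (tiM * sM * tiM * sM) = sM * tM"
proof -
  have a: "sM * tM * sM * tM = tiM * sM"
  proof -
    have "tiM * (tM * sM * tM * sM * tM) = tiM * sM" by (simp add: tstst)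
    then show ?thesis by (simp add: mult.assoc[symmetric] tit)
  qed
  have b: "sM * tM * sM = tiM * sM * tiM"
  proof -
    have "sM * tM * sM * tM * tiM = tiM * sM * tiM" using a by simp
    then show ?thesis by (simp add: mult.assoc tti)
  qed
  have "tiM * sM * tiM * sM = sM * tM * sM * sM" using b by simp
  also have "\<dots> = - (sM * tM)" by (simp add: mult.assoc ss)
  finally show ?thesis by simp
qed

lemma f_S_direct: assumes "det Y = 1" "0 < Y$2$1" "0 \<le> Y$1$1" "Y$1$1 < Y$2$1"
  shows "f (mk 0 (-1) 1 0 ** Y) = sM * f Y"
proof -
  obtain a b c d where Y: "Y = mk a b c d" using mk_eta by blast
  have dt: "a * d - b * c = 1" using assms(1) by (simp add: Y mk_det)
  have SY: "mk 0 (-1) 1 0 ** Y = mk (-c) (-d) a b" by (simp add: Y mk_mult)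
  show ?thesis
  proof (cases "a = 0")
    case True
    then have "(- b) * c = 1" using dt by simp
    then have "(- b = 1 \<and> c = 1) \<or> (- b = -1 \<and> c = -1)" by (simp only: zmult_eq_1_iff)
    then have bc: "c = 1" "b = -1" using assms(2) Y by auto
    have rY: "redm Y = mk 1 d 0 1" using True bc by (simp add: Y redm_def)
    have "f Y = tpow (a div c) * sM * f (redm Y)" using bc by (simp add: Y f_cne)
    also have "\<dots> = sM * tpow d" using True bc by (simp add: rY f_c0)
    finally have "f Y = sM * tpow d" .
    moreover have "f (mk 0 (-1) 1 0 ** Y) = - tpow d" using True bc by (simp add: SY f_c0)
    ultimately show ?thesis by (simp add: mult.assoc[symmetric] ss)
  next
    case False
    then have q: "a div c = 0" "a mod c = a" using assms Y by simp_all
    have rY: "redm Y = - (mk 0 (-1) 1 0 ** Y)" unfolding SY by (simp add: Y redm_def q mk_neg)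
    have dS: "det (mk 0 (-1) 1 0 ** Y) = 1" by (simp add: det_mul mk_det assms(1))
    have "f Y = sM * f (redm Y)" using assms Y q by (simp add: f_cne)
    also have "\<dots> = - (sM * f (mk 0 (-1) 1 0 ** Y))" unfolding rY f_neg[OF dS] by simp
    finally have "sM * f Y = - (sM * sM * f (mk 0 (-1) 1 0 ** Y))" by (simp add: mult.assoc)
    then show ?thesis by (simp add: ss)
  qed
qed

lemma f_S_k: assumes "det Y = 1" "0 < Y$2$1" "0 \<le> Y$1$1" "Y$1$1 < Y$2$1"
  shows "f (mk 0 (-1) 1 0 ** (mk 1 (int k) 0 1 ** Y)) = sM * tpow (int k) * f Y"
proof (induction k)
  case 0 then show ?case using f_S_direct[OF assms] by (simp add: mkI_mult)
next
  case (Suc k)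
  obtain a b c d where Y: "Y = mk a b c d" using mk_eta by blast
  let ?Z = "mk 1 (int k) 0 1 ** Y"
  have Z: "?Z = mk (a + int k * c) (b + int k * d) c d" by (simp add: Y mk_mult)
  define W where "W = mk 1 (-1) 0 1 ** (- (mk 0 (-1) 1 0 ** ?Z))"
  have W: "W = mk (c + (a + int k * c)) (d + (b + int k * d)) (- (a + int k * c)) (- (b + int k * d))"
    by (simp add: W_def Z mk_mult mk_neg algebra_simps)
  have key: "mk 0 (-1) 1 0 ** (mk 1 (int (Suc k)) 0 1 ** Y) = mk 1 (-1) 0 1 ** (mk 0 (-1) 1 0 ** W)"
    by (simp add: W Y mk_mult algebra_simps)
  have dY: "det ?Z = 1" by (simp add: det_mul mk_det assms(1))
  have dW: "det W = 1" by (simp add: W_def det_mul mk_det assms(1) det_neg2)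
  have dSW: "det (mk 0 (-1) 1 0 ** W) = 1" by (simp add: det_mul mk_det dW)
  have dSZ: "det (mk 0 (-1) 1 0 ** ?Z) = 1" by (simp add: det_mul mk_det assms(1))
  have SW: "mk 0 (-1) 1 0 ** W = mk (a + int k * c) (b + int k * d) (c + (a + int k * c)) (d + (b + int k * d))"
    by (simp add: W mk_mult algebra_simps)
  have cpos: "0 < c" "0 \<le> a" using assms Y by simp_all
  then have kc: "0 \<le> int k * c" by simp
  have p1: "0 < c + (a + int k * c)" "0 \<le> a + int k * c" "a + int k * c < c + (a + int k * c)"
    using cpos kc by linarith+
  have "f (mk 0 (-1) 1 0 ** (mk 0 (-1) 1 0 ** W)) = sM * f (mk 0 (-1) 1 0 ** W)"
  proof (rule f_S_direct[OF dSW])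
    show "0 < (mk 0 (-1) 1 0 ** W) $ 2 $ 1" by (simp only: SW mk_nth p1)
    show "0 \<le> (mk 0 (-1) 1 0 ** W) $ 1 $ 1" by (simp only: SW mk_nth p1)
    show "(mk 0 (-1) 1 0 ** W) $ 1 $ 1 < (mk 0 (-1) 1 0 ** W) $ 2 $ 1" by (simp only: SW mk_nth p1)
  qed
  moreover have "mk 0 (-1) 1 0 ** (mk 0 (-1) 1 0 ** W) = - W"
    by (simp add: W mk_mult mk_neg)
  ultimately have "- f W = sM * f (mk 0 (-1) 1 0 ** W)" using f_neg[OF dW] by simp
  then have "sM * (- f W) = sM * (sM * f (mk 0 (-1) 1 0 ** W))" by (rule arg_cong)
  then have fSW: "f (mk 0 (-1) 1 0 ** W) = sM * f W" by (simp add: mult.assoc[symmetric] ss)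
  have fW: "f W = - (tiM * (sM * tpow (int k) * f Y))"
    using f_Tq[of "- (mk 0 (-1) 1 0 ** ?Z)" "-1"] f_neg[OF dSZ] Suc.IH
    by (simp add: W_def det_neg2 dSZ tpow_pred[of 0, simplified])
  have "f (mk 0 (-1) 1 0 ** (mk 1 (int (Suc k)) 0 1 ** Y)) = tiM * f (mk 0 (-1) 1 0 ** W)"
    unfolding key using f_Tq[OF dSW, of "-1"] by (simp add: tpow_pred[of 0, simplified])
  also have "\<dots> = - (tiM * sM * tiM * sM) * tpow (int k) * f Y"
    by (simp add: fSW fW mult.assoc)
  also have "\<dots> = (sM * tM) * tpow (int k) * f Y" by (simp only: grp1)
  also have "\<dots> = sM * tpow (int (Suc k)) * f Y" using tpow_suc[of "int k"] by (simp add: mult.assoc add.commute)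
  finally show ?case .
qed



lemma f_Tq_nat: "det Y = 1 \<Longrightarrow> f (mk 1 (int k) 0 1 ** Y) = tpow (int k) * f Y"
  by (rule f_Tq)

lemma mult_neg2: "(A::int^2^2) ** (- B) = - (A ** B)"
  by (simp add: matrix_matrix_mult_def vec_eq_iff sum_negf)

lemma f_S_pos: assumes "det Y = 1" "0 < Y$2$1" "0 \<le> Y$1$1"
  shows "f (mk 0 (-1) 1 0 ** Y) = sM * f Y"
proof -
  obtain a b c d where Y: "Y = mk a b c d" using mk_eta by blast
  define q where "q = a div c"
  have c: "0 < c" "0 \<le> a" using assms Y by simp_all
  then have q0: "0 \<le> q" by (simp add: q_def pos_imp_zdiv_nonneg_iff)
  define Y0 where "Y0 = mk (a mod c) (b - q * d) c d"
  have e: "Y = mk 1 (int (nat q)) 0 1 ** Y0"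
  proof -
    have "a = q * c + a mod c" by (simp add: q_def)
    then show ?thesis using q0 by (simp add: Y Y0_def mk_mult algebra_simps)
  qed
  have d0: "det Y0 = 1" using assms(1) e by (simp add: det_mul mk_det)
  have h: "f (mk 0 (-1) 1 0 ** (mk 1 (int (nat q)) 0 1 ** Y0)) = sM * tpow (int (nat q)) * f Y0"
    by (rule f_S_k[OF d0]) (use c in \<open>simp_all add: Y0_def\<close>)
  show ?thesis unfolding e h f_Tq[OF d0] by (simp add: mult.assoc)
qed

lemma SS: "mk 0 (-1) 1 0 ** (mk 0 (-1) 1 0 ** Z) = - (Z::int^2^2)"
proof -
  have "mk 0 (-1) 1 0 ** (mk 0 (-1) 1 0 ** mk (Z$1$1) (Z$1$2) (Z$2$1) (Z$2$2)) = - mk (Z$1$1) (Z$1$2) (Z$2$1) (Z$2$2)"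
    by (simp add: mk_mult mk_neg)
  then show "mk 0 (-1) 1 0 ** (mk 0 (-1) 1 0 ** Z) = - Z" by (simp only: mk_eta[symmetric])
qed

lemma f_S_cpos: assumes "det Y = 1" "0 < Y$2$1" shows "f (mk 0 (-1) 1 0 ** Y) = sM * f Y"
proof -
  obtain a b c d where Y: "Y = mk a b c d" using mk_eta by blast
  have dS: "det (mk 0 (-1) 1 0 ** Y) = 1" by (simp add: det_mul mk_det assms)
  consider "0 \<le> a" | "a < 0" by linarith
  then show ?thesis
  proof cases
    case 1
    then show ?thesis using f_S_pos[OF assms] Y by simp
  next
    case 2
    define V where "V = - (mk 0 (-1) 1 0 ** Y)"
    have dV: "det V = 1" by (simp add: V_def det_neg2 dS)
    have V: "V = mk c d (-a) (-b)" by (simp add: V_def Y mk_mult mk_neg)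
    have "f (mk 0 (-1) 1 0 ** V) = sM * f V" using 2 assms Y by (intro f_S_pos[OF dV]) (simp_all add: V)
    moreover have "mk 0 (-1) 1 0 ** V = Y" unfolding V_def
      by (simp add: mult_neg2 SS)
    ultimately have "f Y = - (sM * f (mk 0 (-1) 1 0 ** Y))" by (simp add: V_def f_neg[OF dS])
    then have "sM * f Y = sM * (- (sM * f (mk 0 (-1) 1 0 ** Y)))" by (rule arg_cong)
    then show ?thesis by (simp add: mult.assoc[symmetric] ss)
  qed
qed

lemma f_S: assumes "det Y = 1" shows "f (mk 0 (-1) 1 0 ** Y) = sM * f Y"
proof -
  obtain a b c d where Y: "Y = mk a b c d" using mk_eta by blast
  have dS: "det (mk 0 (-1) 1 0 ** Y) = 1" by (simp add: det_mul mk_det assms)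
  consider "c = 0" | "0 < c" | "c < 0" by linarith
  then show ?thesis
  proof cases
    case 1
    then have a: "a = 1 \<or> a = -1" using det1_c0[OF assms] Y by auto
    have SY: "mk 0 (-1) 1 0 ** Y = mk (-c) (-d) a b" by (simp add: Y mk_mult)
    have r: "redm (mk 0 (-1) 1 0 ** Y) = Y" using 1 a unfolding SY by (auto simp: Y redm_def)
    have ne: "(mk 0 (-1) 1 0 ** Y) $ 2 $ 1 \<noteq> 0" using a by (auto simp: SY)
    have q: "(mk 0 (-1) 1 0 ** Y) $ 1 $ 1 div (mk 0 (-1) 1 0 ** Y) $ 2 $ 1 = 0" using 1 by (simp add: SY)
    show ?thesis unfolding f_cne[OF ne] q r by simp
  next
    case 2
    then show ?thesis using f_S_cpos[OF assms] Y by simp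
  next
    case 3
    have dn: "det (- Y) = 1" by (simp add: det_neg2 assms)
    have "f (mk 0 (-1) 1 0 ** (- Y)) = sM * f (- Y)" using 3 by (intro f_S_cpos[OF dn]) (simp add: Y mk_neg)
    then show ?thesis by (simp add: f_neg[OF assms] f_neg[OF dS] mult_neg2)
  qed
qed



lemma mult_neg1: "(- A) ** (B::int^2^2) = - (A ** B)"
  by (simp add: matrix_matrix_mult_def vec_eq_iff sum_negf)

lemma f_hom: "det X = 1 \<Longrightarrow> det Z = 1 \<Longrightarrow> f (X ** Z) = f X * f Z"
proof (induction X rule: f.induct)
  case (1 X)
  obtain a b c d where X: "X = mk a b c d" using mk_eta by blast
  show ?case
  proof (cases "c = 0")
    case True
    then have "(a = 1 \<and> d = 1) \<or> (a = -1 \<and> d = -1)" using det1_c0[OF "1.prems"(1)] X by simp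
    then show ?thesis
    proof
      assume h: "a = 1 \<and> d = 1"
      then have "X = mk 1 b 0 1" using True X by simp
      then show ?thesis using f_Tq[OF "1.prems"(2), of b] h True by (simp add: f_c0)
    next
      assume h: "a = -1 \<and> d = -1"
      then have "X = - mk 1 (-b) 0 1" using True X by (simp add: mk_neg)
      moreover have "det (mk 1 (-b) 0 1 ** Z) = 1" by (simp add: det_mul mk_det "1.prems")
      ultimately show ?thesis using f_Tq[OF "1.prems"(2), of "-b"] h True
        by (simp add: f_c0 mult_neg1 f_neg)
    qed
  next
    case False
    define q where "q = a div c"
    have dr: "det (redm X) = 1" using "1.prems" det_redm by simp
    have e: "X = mk 1 q 0 1 ** (mk 0 (-1) 1 0 ** redm X)"
    proof -
      have "a = q * c + a mod c" by (simp add: q_def)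
      then show ?thesis by (simp add: X redm_def q_def[symmetric] mk_mult algebra_simps)
    qed
    have d1: "det (redm X ** Z) = 1" using dr "1.prems"(2) det_mul[of "redm X" Z] by simp
    have d2: "det (mk 0 (-1) 1 0 ** (redm X ** Z)) = 1" using d1 by (simp add: det_mul[of "mk 0 (-1) 1 0"] mk_det)
    have "f (X ** Z) = f (mk 1 q 0 1 ** (mk 0 (-1) 1 0 ** (redm X ** Z)))"
      by (subst e) (simp add: matrix_mul_assoc)
    also have "\<dots> = tpow q * (sM * f (redm X ** Z))" by (simp add: f_Tq[OF d2] f_S[OF d1])
    also have "\<dots> = tpow q * (sM * (f (redm X) * f Z))"
      using "1.IH" False X dr "1.prems"(2) by simp
    also have "\<dots> = f X * f Z"
    proof -
      have "f X = tpow q * sM * f (redm X)" using False X f_cne[of X] by (simp add: q_def)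
      then show ?thesis by (simp add: mult.assoc)
    qed
    finally show ?thesis .
  qed
qed

lemma f_S_val: "f (mk 0 (-1) 1 0) = sM"
proof -
  have "redm (mk 0 (-1) 1 0) = mk 1 0 0 1" by (simp add: redm_def)
  then show ?thesis by (simp add: f_cne f_c0)
qed

lemma f_T_val: "f (mk 1 1 0 1) = tM" by (simp add: f_c0)
lemma f_I_val: "f (mk 1 0 0 1) = 1" by (simp add: f_c0)



type_synonym imat = "nat \<Rightarrow> nat \<Rightarrow> int"

definition blk :: "nat \<Rightarrow> nat" where "blk n = (n + 1) div 2"

definition BT :: "imat \<Rightarrow> bool" where
  "BT X \<longleftrightarrow> (\<forall>m n. X m n \<noteq> 0 \<longrightarrow> 1 \<le> m \<and> 1 \<le> n \<and> blk m \<le> blk n)"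

definition imul :: "imat \<Rightarrow> imat \<Rightarrow> imat" where
  "imul X Y m n = (\<Sum>k\<in>{1..2 * blk n}. X m k * Y k n)"

definition iid :: imat where "iid m n = (if 1 \<le> m \<and> m = n then 1 else 0)"

lemma blk_le_imp: "blk k \<le> blk n \<Longrightarrow> k \<le> 2 * blk n"
  unfolding blk_def by linarith

lemma blk_mono: "k \<le> n \<Longrightarrow> blk k \<le> blk n"
  unfolding blk_def by (simp add: div_le_mono)

lemma BTD: "BT X \<Longrightarrow> X m n \<noteq> 0 \<Longrightarrow> 1 \<le> m \<and> 1 \<le> n \<and> blk m \<le> blk n"
  unfolding BT_def by blast

lemma BT_imul: "BT X \<Longrightarrow> BT Y \<Longrightarrow> BT (imul X Y)"
  unfolding BT_def imul_def
  by (smt (verit, ccfv_threshold) dual_order.trans mult_eq_0_iff sum.neutral)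

lemma BT_iid: "BT iid" by (auto simp: BT_def iid_def)

lemma imul_range:
  assumes "BT Y" "finite A" "{1..2 * blk n} \<subseteq> A"
  shows "imul X Y m n = (\<Sum>k\<in>A. X m k * Y k n)"
  unfolding imul_def
proof (rule sum.mono_neutral_left[OF assms(2) assms(3)])
  show "\<forall>i\<in>A - {1..2 * blk n}. X m i * Y i n = 0"
    using BTD[OF assms(1)] blk_le_imp by fastforce
qed

lemma imul_assoc:
  assumes "BT Y" "BT Z"
  shows "imul (imul X Y) Z = imul X (imul Y Z)"
proof (intro ext)
  fix m n
  let ?A = "{1..2 * blk n}"
  have inner: "imul X Y m k = (\<Sum>l\<in>?A. X m l * Y l k)" if "Z k n \<noteq> 0" for k
  proof (rule imul_range[OF assms(1)])
    show "{1..2 * blk k} \<subseteq> ?A" using BTD[OF assms(2) that] by auto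
  qed simp
  have "imul (imul X Y) Z m n = (\<Sum>k\<in>?A. (\<Sum>l\<in>?A. X m l * Y l k) * Z k n)"
    unfolding imul_def[of "imul X Y"]
    by (intro sum.cong refl, rename_tac k, case_tac "Z k n = 0") (simp_all add: inner)
  also have "\<dots> = (\<Sum>l\<in>?A. X m l * (\<Sum>k\<in>?A. Y l k * Z k n))"
    by (simp add: sum_distrib_left sum_distrib_right mult.assoc) (rule sum.swap)
  also have "\<dots> = imul X (imul Y Z) m n" by (simp add: imul_def)
  finally show "imul (imul X Y) Z m n = imul X (imul Y Z) m n" .
qed

lemma imul_add_right: "imul X (\<lambda>m n. Y m n + Z m n) = (\<lambda>m n. imul X Y m n + imul X Z m n)"
  by (auto simp: imul_def algebra_simps sum.distrib intro!: ext)

lemma imul_iid_left: "BT Y \<Longrightarrow> imul iid Y = Y"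
proof (intro ext)
  fix m n assume bt: "BT Y"
  show "imul iid Y m n = Y m n"
  proof (cases "m \<in> {1..2 * blk n}")
    case True
    then show ?thesis unfolding imul_def iid_def
      by (simp add: if_distrib[of "\<lambda>x. x * _"] sum.delta cong: if_cong)
  next
    case False
    then have "Y m n = 0" using BTD[OF bt, of m n] blk_le_imp by fastforce
    moreover have "imul iid Y m n = 0" unfolding imul_def iid_def using False
      by (intro sum.neutral) auto
    ultimately show ?thesis by simp
  qed
qed

lemma imul_iid_right: "BT X \<Longrightarrow> imul X iid = X"
proof (intro ext)
  fix m n assume bt: "BT X"
  show "imul X iid m n = X m n"
  proof (cases "n \<ge> 1")
    case True
    have "n \<in> {1..2 * blk n}" using True unfolding blk_def by auto
    then show ?thesis unfolding imul_def iid_def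
      by (simp add: if_distrib[of "\<lambda>x. _ * x"] sum.delta' cong: if_cong)
  next
    case False
    then have "X m n = 0" using BTD[OF bt, of m n] by fastforce
    moreover have "imul X iid m n = 0" unfolding imul_def iid_def using False by (intro sum.neutral) auto
    ultimately show ?thesis by simp
  qed
qed



definition tp :: "nat \<Rightarrow> nat" where "tp n = (if even n then 1 else 2)"

definition ent :: "m2 \<Rightarrow> nat \<Rightarrow> nat \<Rightarrow> int fps" where
  "ent M i j = (if i = 1 then (if j = 1 then e11 M else e12 M) else (if j = 1 then e21 M else e22 M))"

lemma ent_mult: "ent (A * B) i j = ent A i 1 * ent B 1 j + ent A i 2 * ent B 2 j"
  by (simp add: ent_def)

lemma ent_add: "ent (A + B) i j = ent A i j + ent B i j"
  by (simp add: ent_def)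

definition Phi :: "m2 \<Rightarrow> imat" where
  "Phi M m n = (if 1 \<le> m \<and> 1 \<le> n \<and> blk m \<le> blk n then fps_nth (ent M (tp m) (tp n)) (blk n - blk m) else 0)"

lemma BT_Phi: "BT (Phi M)" by (auto simp: BT_def Phi_def split: if_splits)

lemma blk_odd: "1 \<le> b \<Longrightarrow> blk (2 * b - 1) = b" unfolding blk_def by simp
lemma blk_even: "blk (2 * b) = b" unfolding blk_def by simp
lemma tp_odd: "1 \<le> b \<Longrightarrow> tp (2 * b - 1) = 2" unfolding tp_def by simp
lemma tp_even: "tp (2 * b) = 1" unfolding tp_def by simp
lemma blk_odd': "Suc 0 \<le> b \<Longrightarrow> blk (2 * b - Suc 0) = b" unfolding blk_def by simp
lemma tp_odd': "Suc 0 \<le> b \<Longrightarrow> tp (2 * b - Suc 0) = 2" unfolding tp_def by simp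

lemma sum_pairs: "(\<Sum>k\<in>{1..2*(L::nat)}. g k) = (\<Sum>b\<in>{1..L}. g (2*b - 1) + g (2*b))"
proof (induction L)
  case 0 then show ?case by simp
next
  case (Suc L)
  have "{1..2 * Suc L} = {1..2*L} \<union> {2*L+1, 2*L+2}" by auto
  then have "(\<Sum>k\<in>{1..2 * Suc L}. g k) = (\<Sum>k\<in>{1..2*L}. g k) + (g (2*L+1) + g (2*L+2))"
    by (simp only: sum.union_disjoint) (simp add: ac_simps)
  then show ?case using Suc by (simp add: ac_simps)
qed

lemma sum_shift_from: 
  fixes l L :: nat and h :: "nat \<Rightarrow> 'a::comm_monoid_add"
  assumes "l \<le> L" "1 \<le> l"
  shows "(\<Sum>b\<in>{1..L}. (if l \<le> b then h (b - l) else 0)) = (\<Sum>i\<in>{0..L-l}. h i)"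
proof -
  have "(\<Sum>b\<in>{1..L}. (if l \<le> b then h (b - l) else 0)) = (\<Sum>b\<in>{l..L}. h (b - l))"
    using assms by (intro sum.mono_neutral_cong_right) auto
  also have "\<dots> = (\<Sum>i\<in>{0..L-l}. h i)"
  proof -
    have "(\<Sum>b\<in>{l..L}. h (b - l)) = (\<Sum>b\<in>{0+l..(L-l)+l}. h (b - l))" using assms by simp
    also have "\<dots> = (\<Sum>i\<in>{0..L-l}. h (i + l - l))" by (rule sum.shift_bounds_cl_nat_ivl)
    finally show ?thesis by simp
  qed
  finally show ?thesis .
qed

lemma Phi_mult: "imul (Phi A) (Phi B) = Phi (A * B)"
proof (intro ext)
  fix m n
  show "imul (Phi A) (Phi B) m n = Phi (A * B) m n"
  proof (cases "1 \<le> m \<and> 1 \<le> n \<and> blk m \<le> blk n")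
    case False
    have "imul (Phi A) (Phi B) m n = 0" unfolding imul_def
    proof (intro sum.neutral ballI)
      fix k show "Phi A m k * Phi B k n = 0" using False by (auto simp: Phi_def)
    qed
    then show ?thesis using False by (auto simp: Phi_def)
  next
    case True
    define l where "l = blk m"
    define L where "L = blk n"
    have lL: "1 \<le> l" "l \<le> L" using True unfolding l_def L_def blk_def by auto
    define a1 where "a1 = ent A (tp m) 1"
    define a2 where "a2 = ent A (tp m) 2"
    define c1 where "c1 = ent B 1 (tp n)"
    define c2 where "c2 = ent B 2 (tp n)"
    let ?h = "\<lambda>i. fps_nth a2 i * fps_nth c2 (L - l - i) + fps_nth a1 i * fps_nth c1 (L - l - i)"
    have "imul (Phi A) (Phi B) m n = (\<Sum>b\<in>{1..L}. Phi A m (2*b-1) * Phi B (2*b-1) n + Phi A m (2*b) * Phi B (2*b) n)"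
      unfolding imul_def L_def by (rule sum_pairs)
    also have "\<dots> = (\<Sum>b\<in>{1..L}. (if l \<le> b then ?h (b - l) else 0))"
    proof (rule sum.cong[OF refl])
      fix b assume b: "b \<in> {1..L}"
      then have b1: "1 \<le> b" "b \<le> L" by auto
      have "L - b = L - l - (b - l)" if "l \<le> b" using that b1 by simp
      then show "Phi A m (2*b-1) * Phi B (2*b-1) n + Phi A m (2*b) * Phi B (2*b) n = (if l \<le> b then ?h (b - l) else 0)"
        using b1 True
        by (auto simp: Phi_def blk_odd' blk_even tp_odd' tp_even l_def[symmetric] L_def[symmetric]
            a1_def a2_def c1_def c2_def)
    qed
    also have "\<dots> = (\<Sum>i\<in>{0..L-l}. ?h i)" by (rule sum_shift_from[OF lL(2) lL(1)])
    also have "\<dots> = fps_nth (a2 * c2) (L - l) + fps_nth (a1 * c1) (L - l)"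
      by (simp add: fps_mult_nth sum.distrib)
    also have "\<dots> = Phi (A * B) m n"
      using True by (simp add: Phi_def ent_mult l_def[symmetric] L_def[symmetric] a1_def a2_def c1_def c2_def)
    finally show ?thesis .
  qed
qed

lemma blk_tp_inj: "blk m = blk n \<Longrightarrow> tp m = tp n \<Longrightarrow> m = n"
proof -
  assume a: "blk m = blk n" "tp m = tp n"
  show "m = n"
  proof (cases "even m")
    case True
    then have "even n" using a(2) by (auto simp: tp_def split: if_splits)
    with True a(1) show ?thesis unfolding blk_def by (auto elim!: evenE)
  next
    case False
    then have "odd n" using a(2) by (auto simp: tp_def split: if_splits)
    with False a(1) show ?thesis unfolding blk_def by (auto elim!: oddE)
  qed
qed

lemma Phi_one: "Phi 1 = iid"
proof (intro ext)
  fix m n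
  have e: "ent 1 i j = (if i = j then 1 else 0)" if "i \<in> {1,2}" "j \<in> {1,2}" for i j
    using that by (auto simp: ent_def)
  have t: "tp k \<in> {1,2}" for k by (simp add: tp_def)
  show "Phi 1 m n = iid m n"
    using blk_tp_inj[of m n]
    by (auto simp: Phi_def iid_def e[OF t t])
qed



definition Rm :: imat where
  "Rm m n = (if 1 \<le> m \<and> m \<le> n then int (blk n choose (n - m)) else 0)"
definition Pm :: imat where
  "Pm m n = Phi (tiM ^ blk n) m n"
definition Nsh :: imat where
  "Nsh m n = (if 1 \<le> m \<and> n = m + 1 then 1 else 0)"
definition Nm :: m2 where "Nm = M2 0 XX 1 XX"

lemma BT_Rm: "BT Rm" by (auto simp: BT_def Rm_def blk_mono split: if_splits)
lemma BT_Pm: "BT Pm" using BT_Phi by (auto simp: BT_def Pm_def)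
lemma BT_Nsh: "BT Nsh" by (auto simp: BT_def Nsh_def blk_mono split: if_splits)

lemma imul_gen:
  assumes "BT Y" "finite A" "\<forall>k\<in>{1..2*blk n} - A. X m k * Y k n = 0" "\<forall>k\<in>A - {1..2*blk n}. Y k n = 0"
  shows "imul X Y m n = (\<Sum>k\<in>A. X m k * Y k n)"
proof -
  have "imul X Y m n = (\<Sum>k\<in>A \<union> {1..2*blk n}. X m k * Y k n)"
    using assms by (intro imul_range) auto
  also have "\<dots> = (\<Sum>k\<in>A. X m k * Y k n)"
    using assms by (intro sum.mono_neutral_right) auto
  finally show ?thesis .
qed

lemma imul_Nsh_left: "BT Y \<Longrightarrow> imul Nsh Y m n = (if 1 \<le> m then Y (m + 1) n else 0)"
proof -
  assume bt: "BT Y"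
  show ?thesis
  proof (cases "1 \<le> m")
    case True
    have z: "\<not> Suc m \<le> 2 * blk n \<Longrightarrow> Y (Suc m) n = 0" using BTD[OF bt, of "Suc m" n] blk_le_imp by force
    have "imul Nsh Y m n = (\<Sum>k\<in>{m+1}. Nsh m k * Y k n)"
      by (rule imul_gen[OF bt]) (auto simp: Nsh_def z)
    then show ?thesis using True by (simp add: Nsh_def)
  next
    case False
    then show ?thesis by (simp add: imul_def Nsh_def)
  qed
qed

lemma imul_Nsh_right: "BT X \<Longrightarrow> imul X Nsh m n = (if 2 \<le> n then X m (n - 1) else 0)"
proof -
  assume bt: "BT X"
  show ?thesis
  proof (cases "2 \<le> n")
    case True
    have "n - 1 \<le> 2 * blk n" unfolding blk_def by linarith
    then have "imul X Nsh m n = (\<Sum>k\<in>{n-1}. X m k * Nsh k n)"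
      using True by (intro imul_gen[OF BT_Nsh]) (auto simp: Nsh_def)
    then show ?thesis using True by (simp add: Nsh_def)
  next
    case False
    then have "imul X Nsh m n = 0" unfolding imul_def by (intro sum.neutral) (auto simp: Nsh_def)
    then show ?thesis using False by simp
  qed
qed

lemma n_cases: fixes n :: nat obtains "n = 0" | L where "1 \<le> L" "n = 2 * L" | L where "1 \<le> L" "n = 2 * L - 1"
proof (cases "even n")
  case True
  then obtain L where "n = 2 * L" by (auto elim: evenE)
  show ?thesis
  proof (cases "L = 0")
    case True then show ?thesis using that(1) \<open>n = 2 * L\<close> by simp
  next
    case False then show ?thesis using that(2)[of L] \<open>n = 2 * L\<close> by simp
  qed
next
  case False
  then obtain L where "n = 2 * L + 1" by (auto elim: oddE)
  then show ?thesis using that(3)[of "L + 1"] by simp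
qed

lemma imul_eval:
  "imul X Y m n = (\<Sum>b\<in>{1..blk n}. X m (2*b - 1) * Y (2*b - 1) n + X m (2*b) * Y (2*b) n)"
  unfolding imul_def by (rule sum_pairs)



lemma ent_Nm: "ent Nm 1 1 = 0" "ent Nm 1 2 = XX" "ent Nm 2 1 = 1" "ent Nm 2 2 = XX"
  by (simp_all add: ent_def Nm_def)

lemma Phi_even_col: "1 \<le> b \<Longrightarrow> 1 \<le> L \<Longrightarrow> Phi M (2*b - 1) (2*L) = (if b \<le> L then fps_nth (ent M 2 1) (L - b) else 0)"
  "1 \<le> b \<Longrightarrow> 1 \<le> L \<Longrightarrow> Phi M (2*b) (2*L) = (if b \<le> L then fps_nth (ent M 1 1) (L - b) else 0)"
  "1 \<le> b \<Longrightarrow> 1 \<le> L \<Longrightarrow> Phi M (2*b - 1) (2*L - 1) = (if b \<le> L then fps_nth (ent M 2 2) (L - b) else 0)"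
  "1 \<le> b \<Longrightarrow> 1 \<le> L \<Longrightarrow> Phi M (2*b) (2*L - 1) = (if b \<le> L then fps_nth (ent M 1 2) (L - b) else 0)"
proof -
  assume b: "1 \<le> b" and L: "1 \<le> L"
  have h: "blk (2 * b - 1) = b" "blk (2 * L - 1) = L" "tp (2 * b - 1) = 2" "tp (2 * L - 1) = 2"
    "blk (2*b) = b" "blk (2*L) = L" "tp (2*b) = 1" "tp (2*L) = 1"
    using b L by (simp_all add: blk_def tp_def)
  have p: "1 \<le> 2 * b - 1" "1 \<le> 2 * L - 1" "1 \<le> 2 * b" "1 \<le> 2 * L" using b L by simp_all
  show "Phi M (2*b - 1) (2*L) = (if b \<le> L then fps_nth (ent M 2 1) (L - b) else 0)"
    unfolding Phi_def h using p by simp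
  show "Phi M (2*b) (2*L) = (if b \<le> L then fps_nth (ent M 1 1) (L - b) else 0)"
    unfolding Phi_def h using p by simp
  show "Phi M (2*b - 1) (2*L - 1) = (if b \<le> L then fps_nth (ent M 2 2) (L - b) else 0)"
    unfolding Phi_def h using p by simp
  show "Phi M (2*b) (2*L - 1) = (if b \<le> L then fps_nth (ent M 1 2) (L - b) else 0)"
    unfolding Phi_def h using p by simp
qed

lemmas Phi_even_col' = Phi_even_col[simplified]
lemmas ent_Nm' = ent_Nm[simplified]

lemma Rm_Nm: "imul Rm (Phi Nm) = imul Nsh Rm"
proof (intro ext)
  fix m n
  have rhs: "imul Nsh Rm m n = (if 1 \<le> m then Rm (m + 1) n else 0)" by (rule imul_Nsh_left[OF BT_Rm])
  show "imul Rm (Phi Nm) m n = imul Nsh Rm m n"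
  proof (cases n rule: n_cases)
    case 1
    then show ?thesis unfolding rhs by (simp add: imul_def Rm_def blk_def)
  next
    case (2 L)
    have bl: "blk n = L" using 2 by (simp add: blk_def)
    have "imul Rm (Phi Nm) m n = (\<Sum>b\<in>{1..L}. (if b = L then Rm m (2*L - 1) else 0))"
      unfolding imul_eval bl
      by (rule sum.cong[OF refl]) (auto simp: 2 Phi_even_col' ent_Nm')
    also have "\<dots> = Rm m (2*L - 1)" using 2 by simp
    also have "\<dots> = (if 1 \<le> m then Rm (m + 1) n else 0)"
      using 2 by (auto simp: Rm_def blk_def)
    finally show ?thesis using rhs by simp
  next
    case (3 L)
    have bl: "blk n = L" using 3 by (simp add: blk_def)
    have "imul Rm (Phi Nm) m n = (\<Sum>b\<in>{1..L}. (if b = L - 1 then Rm m (2*b - 1) + Rm m (2*b) else 0))"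
      unfolding imul_eval bl
      by (rule sum.cong[OF refl]) (auto simp: 3 Phi_even_col' ent_Nm')
    also have "\<dots> = (if 2 \<le> L then Rm m (2*L - 3) + Rm m (2*L - 2) else 0)"
      using 3 by (auto simp: sum.delta' algebra_simps numeral_2_eq_2 numeral_3_eq_3)
    also have "\<dots> = (if 1 \<le> m then Rm (m + 1) n else 0)"
    proof (cases "2 \<le> L \<and> 1 \<le> m")
      case True
      have bL: "blk (2*L - 3) = L - 1" "blk (2*L - 2) = L - 1" "blk (2*L - 1) = L"
        using True unfolding blk_def by linarith+
      note bL' = bL[simplified]
      consider "m \<le> 2*L - 3" | "m = 2*L - 2" | "m > 2*L - 2" by linarith
      then show ?thesis
      proof cases
        case 1
        have e: "L = Suc (L - 1)" "2 * L - 1 - (m + 1) = Suc (2 * L - 3 - m)" "2*L - 2 - m = Suc (2 * L - 3 - m)"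
          using True 1 by linarith+
        have "int (L choose (2 * L - 1 - (m + 1))) = int ((L - 1) choose (2*L - 3 - m)) + int ((L-1) choose (2*L - 2 - m))"
          by (subst e(1), subst e(2), subst e(3)) simp
        moreover have "m \<le> 2 * L - 2" "Suc m \<le> 2 * L - Suc 0" using 1 True by linarith+
        ultimately show ?thesis using True 1 by (simp add: Rm_def bL bL' 3)
      next
        case 2
        moreover have "\<not> 2*L-2 \<le> 2*L-3" "Suc (2*L-2) \<le> 2*L - Suc 0" using True by linarith+
        ultimately show ?thesis using True by (simp add: Rm_def bL bL' 3)
      next
        case 4: 3
        moreover have "\<not> m \<le> 2*L-3" "\<not> m \<le> 2*L-2" "\<not> Suc m \<le> 2*L - Suc 0" using 4 True by linarith+
        ultimately show ?thesis using True by (simp add: Rm_def bL bL' 3)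
      qed
    next
      case False
      then show ?thesis using 3 by (auto simp: Rm_def)
    qed
    finally show ?thesis using rhs by simp
  qed
qed



lemma Phi_col_even: "1 \<le> L \<Longrightarrow> Phi M m (2*L) = (if 1 \<le> m \<and> blk m \<le> L then fps_nth (ent M (tp m) 1) (L - blk m) else 0)"
  by (simp add: Phi_def blk_def tp_def)

lemma Phi_col_odd: "1 \<le> L \<Longrightarrow> Phi M m (2*L - 1) = (if 1 \<le> m \<and> blk m \<le> L then fps_nth (ent M (tp m) 2) (L - blk m) else 0)"
proof -
  assume L: "1 \<le> L"
  have "blk (2*L - 1) = L" "tp (2*L - 1) = 2" "1 \<le> 2 * L - 1" using L by (simp_all add: blk_def tp_def)
  then show ?thesis by (simp add: Phi_def)
qed

lemmas Phi_col_odd' = Phi_col_odd[simplified]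

lemma imul_col: "(\<And>k. Y k n = Y' k n) \<Longrightarrow> imul X Y m n = imul X Y' m n"
  by (simp add: imul_def)

lemma tiM_pow_comm: "tiM ^ L * tM = tM * tiM ^ L"
proof (induction L)
  case 0 then show ?case by simp
next
  case (Suc L)
  have "tiM ^ Suc L * tM = tiM * (tiM ^ L * tM)" by (simp add: mult.assoc)
  also have "\<dots> = tiM * tM * tiM ^ L" by (simp add: Suc mult.assoc)
  also have "\<dots> = tM * tiM * tiM ^ L" by (simp add: tti tit)
  finally show ?case by (simp add: mult.assoc)
qed

lemma Nm_tM: "Nm = tM - 1" by (rule m2_eqI) (simp_all add: Nm_def tM_def)

lemma Nm_comm: "Nm * tiM ^ L = tiM ^ L * Nm"
  by (simp add: Nm_tM algebra_simps tiM_pow_comm)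

lemma ent_i: "tp m = 1 \<or> tp m = 2" by (simp add: tp_def)

lemma Nm_P: "imul (Phi Nm) Pm = imul Pm Nsh"
proof (intro ext)
  fix m n
  have rhs: "imul Pm Nsh m n = (if 2 \<le> n then Pm m (n - 1) else 0)" by (rule imul_Nsh_right[OF BT_Pm])
  have lhs: "imul (Phi Nm) Pm m n = Phi (tiM ^ blk n * Nm) m n"
  proof -
    have "imul (Phi Nm) Pm m n = imul (Phi Nm) (Phi (tiM ^ blk n)) m n"
      by (rule imul_col) (simp add: Pm_def)
    then show ?thesis by (simp add: Phi_mult Nm_comm)
  qed
  show "imul (Phi Nm) Pm m n = imul Pm Nsh m n"
  proof (cases n rule: n_cases)
    case 1 then show ?thesis unfolding lhs rhs by (simp add: Phi_def)
  next
    case (2 L)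
    have bl: "blk n = L" "blk (n - 1) = L" "n - 1 = 2 * L - 1" "blk (2 * L) = L" "blk (2 * L - Suc 0) = L" using 2 by (simp_all add: blk_def)
    have e: "ent (tiM ^ L * Nm) i 1 = ent (tiM ^ L) i 2" for i by (simp add: ent_mult ent_Nm ent_Nm')
    note e' = e[simplified]
    show ?thesis unfolding lhs rhs using 2
      by (simp add: bl Pm_def Phi_col_even Phi_col_odd Phi_col_odd' e e')
  next
    case (3 L)
    have bl: "blk n = L" using 3 by (simp add: blk_def)
    have e: "ent (tiM ^ L * Nm) i 2 = XX * (ent (tiM ^ L) i 1 + ent (tiM ^ L) i 2)" for i
      by (simp add: ent_mult ent_Nm ent_Nm' algebra_simps)
    show ?thesis
    proof (cases "L = 1")
      case True
      then have n1: "n = 1" using 3 by simp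
      have z: "fps_nth (ent (B * Nm) i 2) 0 = 0" for B i
        by (simp add: ent_mult ent_Nm ent_Nm' algebra_simps)
      have b1: "1 \<le> m \<Longrightarrow> 1 \<le> blk m" for m by (simp add: blk_def)
      have "Phi (tiM ^ blk n * Nm) m n = 0"
        using Phi_col_odd[of 1 "tiM ^ blk n * Nm" m] n1 z b1[of m] by auto
      then show ?thesis unfolding lhs rhs using n1 by simp
    next
      case False
      then have L2: "2 \<le> L" using 3 by simp
      have bl2: "blk (n - 1) = L - 1" "n - 1 = 2 * (L - 1)" using 3 L2 by (simp_all add: blk_def)
      have e2: "ent (tiM ^ L) i 1 + ent (tiM ^ L) i 2 = ent (tiM ^ (L - 1)) i 1" for i
      proof -
        have "tiM ^ L * tM = tiM ^ (L - 1)"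
        proof -
          have "tiM ^ L = tiM ^ Suc (L - 1)" using L2 by simp
          also have "\<dots> = tiM ^ (L - 1) * tiM" by (rule power_Suc2)
          finally have "tiM ^ L = tiM ^ (L - 1) * tiM" .
          then show ?thesis by (simp add: mult.assoc tit)
        qed
        then have "ent (tiM ^ (L - 1)) i 1 = ent (tiM ^ L * tM) i 1" by simp
        also have "\<dots> = ent (tiM ^ L) i 1 + ent (tiM ^ L) i 2" by (simp add: ent_mult ent_def tM_def)
        finally show ?thesis by simp
      qed
      have L1: "1 \<le> L" "1 \<le> L - 1" using L2 by simp_all
      have lo: "Phi (tiM ^ L * Nm) m n = (if 1 \<le> m \<and> blk m \<le> L then fps_nth (XX * ent (tiM ^ (L - 1)) (tp m) 1) (L - blk m) else 0)"
        unfolding 3 Phi_col_odd[OF L1(1)] e e2 by simp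
      have ro: "Pm m (n - 1) = (if 1 \<le> m \<and> blk m \<le> L - 1 then fps_nth (ent (tiM ^ (L - 1)) (tp m) 1) (L - 1 - blk m) else 0)"
        unfolding Pm_def bl2 Phi_col_even[OF L1(2)] by (simp add: blk_even)
      have "Phi (tiM ^ L * Nm) m n = Pm m (n - 1)"
      proof (cases "1 \<le> m \<and> blk m \<le> L - 1")
        case True
        then have "L - blk m = Suc (L - 1 - blk m)" using L2 by linarith
        then show ?thesis using True L2 unfolding lo ro by simp
      next
        case F: False
        show ?thesis
        proof (cases "1 \<le> m \<and> blk m = L")
          case True
          then show ?thesis using F unfolding lo ro by simp
        next
          case False
          then show ?thesis using F unfolding lo ro by auto
        qed
      qed
      then show ?thesis unfolding lhs rhs bl using L2 3 by simp
    qed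
  qed
qed



lemma nth_1X: "fps_nth ((1 + XX) * A) j = fps_nth A j + (if j = 0 then 0 else fps_nth A (j - 1))"
  by (simp add: distrib_right)
lemma nth_mX: "fps_nth ((- XX) * A) j = - (if j = 0 then 0 else fps_nth A (j - 1))"
  by simp

lemma tiM_Suc: "tiM ^ Suc (Suc k) = tiM * tiM ^ Suc k" by simp

lemma tiM_top:
  "fps_nth (e11 (tiM ^ Suc k)) (Suc k) = 1 \<and> fps_nth (e11 (tiM ^ Suc k)) k = 2 * int k + 1 \<and>
   (\<forall>j>Suc k. fps_nth (e11 (tiM ^ Suc k)) j = 0) \<and>
   fps_nth (e12 (tiM ^ Suc k)) (Suc k) = -1 \<and> fps_nth (e12 (tiM ^ Suc k)) k = - 2 * int k \<and>
   (\<forall>j>Suc k. fps_nth (e12 (tiM ^ Suc k)) j = 0) \<and>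
   fps_nth (e21 (tiM ^ Suc k)) k = -1 \<and> (\<forall>j>k. fps_nth (e21 (tiM ^ Suc k)) j = 0) \<and>
   (1 \<le> k \<longrightarrow> fps_nth (e21 (tiM ^ Suc k)) (k - 1) = - 2 * int k) \<and>
   fps_nth (e22 (tiM ^ Suc k)) k = 1 \<and> (\<forall>j>k. fps_nth (e22 (tiM ^ Suc k)) j = 0) \<and>
   (1 \<le> k \<longrightarrow> fps_nth (e22 (tiM ^ Suc k)) (k - 1) = 2 * int k - 1)"
proof (induction k)
  case 0
  show ?case by (simp add: tiM_def)
next
  case (Suc k)
  define A where "A = e11 (tiM ^ Suc k)"
  define B where "B = e12 (tiM ^ Suc k)"
  define C where "C = e21 (tiM ^ Suc k)"
  define D where "D = e22 (tiM ^ Suc k)"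
  have IH: "fps_nth A (Suc k) = 1" "fps_nth A k = 2 * int k + 1" "\<And>j. j > Suc k \<Longrightarrow> fps_nth A j = 0"
    "fps_nth B (Suc k) = -1" "fps_nth B k = - 2 * int k" "\<And>j. j > Suc k \<Longrightarrow> fps_nth B j = 0"
    "fps_nth C k = -1" "\<And>j. j > k \<Longrightarrow> fps_nth C j = 0"
    "fps_nth D k = 1" "\<And>j. j > k \<Longrightarrow> fps_nth D j = 0"
    using Suc.IH unfolding A_def B_def C_def D_def by blast+
  have E: "e11 (tiM ^ Suc (Suc k)) = (1 + XX) * A + (- XX) * C"
    "e12 (tiM ^ Suc (Suc k)) = (1 + XX) * B + (- XX) * D"
    "e21 (tiM ^ Suc (Suc k)) = - A + C"
    "e22 (tiM ^ Suc (Suc k)) = - B + D"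
    unfolding tiM_Suc A_def B_def C_def D_def by (simp_all add: tiM_def)
  show ?case unfolding E
    by (auto simp: nth_1X nth_mX IH algebra_simps)
qed

lemma BT_zero_far: "BT Y \<Longrightarrow> 2 * blk n < k \<Longrightarrow> Y k n = 0"
  using BTD blk_le_imp by fastforce

lemma RP_row1: "imul Rm Pm 1 n = (if n = 1 then 1 else 0)"
proof -
  have r: "Rm 1 1 = 1" "Rm 1 2 = 1" "Rm 1 3 = 1" by (simp_all add: Rm_def blk_def)
  have r0: "Rm 1 k = 0" if "k \<notin> {1,2,3}" for k
  proof (cases "k = 0")
    case False
    then have "blk k < k - 1" using that unfolding blk_def by auto
    then show ?thesis by (simp add: Rm_def)
  qed (simp add: Rm_def)
  note r0' = r0[simplified]
  have "imul Rm Pm 1 n = (\<Sum>k\<in>{1,2,3}. Rm 1 k * Pm k n)"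
    by (rule imul_gen[OF BT_Pm]) (auto simp: r0 r0' BT_zero_far[OF BT_Pm])
  also have "\<dots> = Pm 1 n + Pm 2 n + Pm 3 n" using r[simplified] by (simp add: r add.assoc)
  also have "\<dots> = (if n = 1 then 1 else 0)"
  proof (cases n rule: n_cases)
    case 1 then show ?thesis by (simp add: Pm_def Phi_def)
  next
    case (2 L)
    then obtain k where k: "L = Suc k" by (cases L) auto
    have b: "blk 1 = 1" "blk 2 = 1" "blk 3 = 2" "tp 1 = 2" "tp 2 = 1" "tp 3 = 2" "blk n = L"
      using 2 by (simp_all add: blk_def tp_def)
    note T = tiM_top[of k]
    have p: "Pm 1 n = fps_nth (e21 (tiM ^ Suc k)) k" "Pm 2 n = fps_nth (e11 (tiM ^ Suc k)) k"
      "Pm 3 n = (if k = 0 then 0 else fps_nth (e21 (tiM ^ Suc k)) (k - 1))"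
      unfolding Pm_def b 2 Phi_col_even[OF 2(1)] using k by (simp_all add: ent_def b blk_def del: power_Suc)
    show ?thesis unfolding p using T 2 k by (cases k) (simp_all del: power_Suc)
  next
    case (3 L)
    then obtain k where k: "L = Suc k" by (cases L) auto
    have b: "blk 1 = 1" "blk 2 = 1" "blk 3 = 2" "tp 1 = 2" "tp 2 = 1" "tp 3 = 2" "blk n = L"
      using 3 by (simp_all add: blk_def tp_def)
    note T = tiM_top[of k]
    have p: "Pm 1 n = fps_nth (e22 (tiM ^ Suc k)) k" "Pm 2 n = fps_nth (e12 (tiM ^ Suc k)) k"
      "Pm 3 n = (if k = 0 then 0 else fps_nth (e22 (tiM ^ Suc k)) (k - 1))"
      unfolding Pm_def b 3 Phi_col_odd[OF 3(1)] using k by (simp_all add: ent_def b blk_def del: power_Suc)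
    show ?thesis unfolding p using T 3 k by (cases k) (simp_all del: power_Suc)
  qed
  finally show ?thesis .
qed



lemma RP_comm: "imul Nsh (imul Rm Pm) = imul (imul Rm Pm) Nsh"
proof -
  have "imul Nsh (imul Rm Pm) = imul (imul Nsh Rm) Pm" by (simp add: imul_assoc BT_Rm BT_Pm)
  also have "\<dots> = imul (imul Rm (Phi Nm)) Pm" by (simp add: Rm_Nm)
  also have "\<dots> = imul Rm (imul (Phi Nm) Pm)" by (simp add: imul_assoc BT_Phi BT_Pm)
  also have "\<dots> = imul Rm (imul Pm Nsh)" by (simp add: Nm_P)
  also have "\<dots> = imul (imul Rm Pm) Nsh" by (simp add: imul_assoc BT_Pm BT_Nsh)
  finally show ?thesis .
qed

lemma RP_id: "imul Rm Pm = iid"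
proof -
  have BTRP: "BT (imul Rm Pm)" by (simp add: BT_imul BT_Rm BT_Pm)
  have "\<forall>n. imul Rm Pm m n = iid m n" for m
  proof (induction m)
    case 0 then show ?case by (simp add: imul_def Rm_def iid_def)
  next
    case (Suc m)
    show ?case
    proof (cases "m = 0")
      case True then show ?thesis using RP_row1 by (simp add: iid_def)
    next
      case False
      show ?thesis
      proof
        fix n
        have "imul Rm Pm (Suc m) n = imul Nsh (imul Rm Pm) m n"
          using imul_Nsh_left[OF BTRP, of m n] False by simp
        also have "\<dots> = imul (imul Rm Pm) Nsh m n" by (simp add: RP_comm)
        also have "\<dots> = (if 2 \<le> n then imul Rm Pm m (n - 1) else 0)" by (rule imul_Nsh_right[OF BTRP])
        also have "\<dots> = iid (Suc m) n" using Suc.IH False by (auto simp: iid_def)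
        finally show "imul Rm Pm (Suc m) n = iid (Suc m) n" .
      qed
    qed
  qed
  then show ?thesis by (intro ext) simp
qed

lemma Rm_inj:
  assumes bt: "BT Z" and z: "imul Rm Z = (\<lambda>m n. 0)"
  shows "Z = (\<lambda>m n. 0)"
proof (rule ccontr)
  assume "Z \<noteq> (\<lambda>m n. 0)"
  then obtain m0 n where "Z m0 n \<noteq> 0" by (auto simp: fun_eq_iff)
  define S where "S = {k. Z k n \<noteq> 0}"
  have "S \<subseteq> {1..2 * blk n}"
  proof
    fix k assume "k \<in> S"
    then have "Z k n \<noteq> 0" by (simp add: S_def)
    from BTD[OF bt this] show "k \<in> {1..2 * blk n}" using blk_le_imp by simp
  qed
  then have fin: "finite S" by (rule finite_subset) simp
  have ne: "S \<noteq> {}" using \<open>Z m0 n \<noteq> 0\<close> by (auto simp: S_def)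
  define k0 where "k0 = Max S"
  have k0S: "k0 \<in> S" using fin ne by (simp add: k0_def)
  then have zk0: "Z k0 n \<noteq> 0" by (simp add: S_def)
  have k0r: "k0 \<in> {1..2 * blk n}" using BTD[OF bt zk0] blk_le_imp by auto
  have above: "Z k n = 0" if "k > k0" for k
  proof (rule ccontr)
    assume "Z k n \<noteq> 0"
    then have "k \<in> S" by (simp add: S_def)
    then have "k \<le> k0" using fin by (simp add: k0_def)
    then show False using that by simp
  qed
  have "imul Rm Z k0 n = (\<Sum>k\<in>{1..2 * blk n}. (if k = k0 then Z k0 n else 0))"
    unfolding imul_def
  proof (rule sum.cong[OF refl])
    fix k assume "k \<in> {1..2 * blk n}"
    show "Rm k0 k * Z k n = (if k = k0 then Z k0 n else 0)"
    proof (cases "k = k0")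
      case True then show ?thesis using k0r by (simp add: Rm_def)
    next
      case False
      then show ?thesis
      proof (cases "k < k0")
        case True then show ?thesis by (simp add: Rm_def)
      next
        case False
        then show ?thesis using \<open>k \<noteq> k0\<close> above[of k] by simp
      qed
    qed
  qed
  also have "\<dots> = Z k0 n" using k0r by simp
  finally have "imul Rm Z k0 n \<noteq> 0" using zk0 by simp
  moreover have "imul Rm Z k0 n = 0" using fun_cong[OF fun_cong[OF z], of k0 n] by simp
  ultimately show False by simp
qed

lemma imul_diff_right: "imul X (\<lambda>m n. Y m n - Z m n) = (\<lambda>m n. imul X Y m n - imul X Z m n)"
  unfolding imul_def by (intro ext) (simp add: right_diff_distrib sum_subtractf)

lemma PR_id: "imul Pm Rm = iid"
proof -
  define D where "D = imul Pm Rm"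
  have btD: "BT D" by (simp add: D_def BT_imul BT_Pm BT_Rm)
  have "imul Rm D = imul (imul Rm Pm) Rm" unfolding D_def by (rule imul_assoc[symmetric, OF BT_Pm BT_Rm])
  also have "\<dots> = Rm" by (simp only: RP_id imul_iid_left[OF BT_Rm])
  finally have "imul Rm D = Rm" .
  moreover have "imul Rm iid = Rm" by (simp add: imul_iid_right BT_Rm)
  ultimately have "imul Rm (\<lambda>m n. D m n - iid m n) = (\<lambda>m n. 0)"
    by (simp add: imul_diff_right)
  moreover have "BT (\<lambda>m n. D m n - iid m n)"
    unfolding BT_def
  proof (intro allI impI)
    fix m n assume "D m n - iid m n \<noteq> 0"
    then have "D m n \<noteq> 0 \<or> iid m n \<noteq> 0" by auto
    then show "1 \<le> m \<and> 1 \<le> n \<and> blk m \<le> blk n" using BTD[OF btD] BTD[OF BT_iid] by blast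
  qed
  ultimately have "(\<lambda>m n. D m n - iid m n) = (\<lambda>m n. 0)" by (rule Rm_inj[rotated])
  note h = this
  show ?thesis
  proof (intro ext)
    fix m n
    have "D m n - iid m n = 0" using fun_cong[OF fun_cong[OF h], of m n] by simp
    then show "imul Pm Rm m n = iid m n" by (simp add: D_def)
  qed
qed



definition tauI :: "int^2^2 \<Rightarrow> imat" where
  "tauI Y = imul Rm (imul (Phi (f Y)) Pm)"

lemma BT_tauI: "BT (tauI Y)"
  by (simp add: tauI_def BT_imul BT_Rm BT_Phi BT_Pm)

lemma BT_PhiP: "BT (imul (Phi M) Pm)" by (simp add: BT_imul BT_Phi BT_Pm)

lemma tauI_hom: assumes "det X = 1" "det Y = 1" shows "tauI (X ** Y) = imul (tauI X) (tauI Y)"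
proof -
  let ?A = "Phi (f X)" and ?B = "Phi (f Y)"
  have "imul (tauI X) (tauI Y) = imul Rm (imul (imul ?A Pm) (imul Rm (imul ?B Pm)))"
    unfolding tauI_def by (rule imul_assoc[OF BT_PhiP BT_tauI[unfolded tauI_def]])
  also have "imul (imul ?A Pm) (imul Rm (imul ?B Pm)) = imul ?A (imul Pm (imul Rm (imul ?B Pm)))"
    by (rule imul_assoc[OF BT_Pm BT_tauI[unfolded tauI_def]])
  also have "imul Pm (imul Rm (imul ?B Pm)) = imul (imul Pm Rm) (imul ?B Pm)"
    by (rule imul_assoc[symmetric, OF BT_Rm BT_PhiP])
  also have "\<dots> = imul ?B Pm" by (simp only: PR_id imul_iid_left[OF BT_PhiP])
  also have "imul ?A (imul ?B Pm) = imul (imul ?A ?B) Pm" by (rule imul_assoc[symmetric, OF BT_Phi BT_Pm])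
  also have "\<dots> = imul (Phi (f (X ** Y))) Pm" by (simp add: Phi_mult f_hom[OF assms])
  finally show ?thesis by (simp add: tauI_def)
qed

lemma Phi_add: "Phi (A + B) = (\<lambda>m n. Phi A m n + Phi B m n)"
  by (intro ext) (simp add: Phi_def ent_add)

lemma imul_add_left: "imul (\<lambda>m n. X m n + Y m n) Z = (\<lambda>m n. imul X Z m n + imul Y Z m n)"
  unfolding imul_def by (intro ext) (simp add: distrib_right sum.distrib)

lemma tM_split: "tM = 1 + Nm" by (rule m2_eqI) (simp_all add: Nm_def tM_def)

lemma tauI_T: "tauI (mk 1 1 0 1) = (\<lambda>m n. iid m n + Nsh m n)"
proof -
  have "imul (Phi tM) Pm = (\<lambda>m n. Pm m n + imul Pm Nsh m n)"
    unfolding tM_split Phi_add Phi_one imul_add_left imul_iid_left[OF BT_Pm] Nm_P ..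
  then have "tauI (mk 1 1 0 1) = imul Rm (\<lambda>m n. Pm m n + imul Pm Nsh m n)"
    by (simp add: tauI_def f_T_val)
  also have "\<dots> = (\<lambda>m n. imul Rm Pm m n + imul Rm (imul Pm Nsh) m n)" by (rule imul_add_right)
  also have "imul Rm (imul Pm Nsh) = imul (imul Rm Pm) Nsh" by (rule imul_assoc[symmetric, OF BT_Pm BT_Nsh])
  finally show ?thesis by (simp add: RP_id imul_iid_left[OF BT_Nsh])
qed

lemma tauI_I: "tauI (mk 1 0 0 1) = iid"
  by (simp add: tauI_def f_I_val Phi_one imul_iid_left[OF BT_Pm] RP_id)

definition cm :: "imat \<Rightarrow> mat" where "cm X = (\<lambda>m n. of_int (X m n))"

lemma cm_mult: assumes "BT Y" shows "cm X \<star> cm Y = cm (imul X Y)"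
proof (intro ext)
  fix m n
  have "(cm X \<star> cm Y) m n = (\<Sum>k\<in>{k. Y k n \<noteq> 0}. of_int (X m k * Y k n))"
    by (simp add: mat_mult_def cm_def)
  also have "\<dots> = (\<Sum>k\<in>{1..2 * blk n}. of_int (X m k * Y k n))"
  proof (rule sum.mono_neutral_left)
    show "{k. Y k n \<noteq> 0} \<subseteq> {1..2 * blk n}" using BTD[OF assms] blk_le_imp by auto
  qed auto
  also have "\<dots> = cm (imul X Y) m n" by (simp add: cm_def imul_def)
  finally show "(cm X \<star> cm Y) m n = cm (imul X Y) m n" .
qed

lemma cm_iid: "cm iid = mat_id" by (intro ext) (auto simp: cm_def iid_def mat_id_def)

lemma cm_ringA: "BT X \<Longrightarrow> cm X \<in> ringA"
proof -
  assume bt: "BT X"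
  have "finite {i. cm X i j \<noteq> 0}" for j
    by (rule finite_subset[of _ "{1..2 * blk j}"]) (use BTD[OF bt] blk_le_imp in \<open>auto simp: cm_def\<close>)
  moreover have "cm X i j = 0" if "i = 0 \<or> j = 0" for i j using that BTD[OF bt, of i j] by (auto simp: cm_def)
  ultimately show ?thesis by (auto simp: ringA_def)
qed



definition kap :: "m2 \<Rightarrow> int^2^2" where
  "kap M = mk (fps_nth (e22 M) 0) (fps_nth (e21 M) 0) (fps_nth (e12 M) 0) (fps_nth (e11 M) 0)"

lemma kap_mult: "kap (A * B) = kap A ** kap B"
  by (simp add: kap_def mk_mult fps_mult_nth_0 algebra_simps)

lemma kap_neg: "kap (- A) = - kap A" by (simp add: kap_def mk_neg)

lemma kap_vals: "kap 1 = mk 1 0 0 1" "kap sM = mk 0 (-1) 1 0" "kap tM = mk 1 1 0 1" "kap tiM = mk 1 (-1) 0 1"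
  by (simp_all add: kap_def sM_def tM_def tiM_def cc_def bb_def)

lemma kap_tpow: "kap (tpow q) = mk 1 q 0 1"
proof (induction q rule: int_induct[where k=0])
  case base then show ?case by (simp add: kap_vals)
next
  case (step1 i) then show ?case by (simp add: tpow_suc kap_mult kap_vals mk_mult)
next
  case (step2 i) then show ?case by (simp add: tpow_pred kap_mult kap_vals mk_mult)
qed

lemma kap_f: "det Y = 1 \<Longrightarrow> kap (f Y) = Y"
proof (induction Y rule: f.induct)
  case (1 Y)
  obtain a b c d where Y: "Y = mk a b c d" using mk_eta by blast
  show ?case
  proof (cases "c = 0")
    case True
    then have "(a = 1 \<and> d = 1) \<or> (a = -1 \<and> d = -1)" using det1_c0[OF "1.prems"] Y by simp
    then show ?thesis using True by (auto simp: Y f_c0 kap_tpow kap_neg mk_neg)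
  next
    case False
    have dr: "det (redm Y) = 1" using "1.prems" det_redm by simp
    have IH: "kap (f (redm Y)) = redm Y" using "1.IH" False Y dr by simp
    have "a = (a div c) * c + a mod c" by simp
    then have e: "mk 1 (a div c) 0 1 ** (mk 0 (-1) 1 0 ** redm Y) = Y"
      by (simp add: Y redm_def mk_mult algebra_simps)
    have "kap (f Y) = mk 1 (a div c) 0 1 ** (mk 0 (-1) 1 0 ** redm Y)"
      using False by (simp add: f_cne Y kap_mult kap_tpow kap_vals IH[unfolded Y] matrix_mul_assoc)
    then show ?thesis using e by simp
  qed
qed

definition bm :: "imat \<Rightarrow> nat \<Rightarrow> int^2^2" where
  "bm X i = mk (X (2*i-1) (2*i-1)) (X (2*i-1) (2*i)) (X (2*i) (2*i-1)) (X (2*i) (2*i))"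

lemma imul_diag:
  assumes "BT X" "BT Y" "1 \<le> i" "m \<in> {2*i-1, 2*i}" "n \<in> {2*i-1, 2*i}"
  shows "imul X Y m n = X m (2*i-1) * Y (2*i-1) n + X m (2*i) * Y (2*i) n"
proof -
  have bm: "blk m = i" "blk n = i" using assms(3-5) by (auto simp: blk_def)
  have "imul X Y m n = (\<Sum>k\<in>{2*i-1, 2*i}. X m k * Y k n)"
  proof (rule imul_gen[OF assms(2)])
    show "\<forall>k\<in>{1..2 * blk n} - {2 * i - 1, 2 * i}. X m k * Y k n = 0"
    proof
      fix k assume k: "k \<in> {1..2 * blk n} - {2 * i - 1, 2 * i}"
      then have "blk k < i" using bm unfolding blk_def by auto
      then have "X m k = 0" using BTD[OF assms(1), of m k] bm by auto
      then show "X m k * Y k n = 0" by simp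
    qed
    show "\<forall>k\<in>{2 * i - 1, 2 * i} - {1..2 * blk n}. Y k n = 0" using bm assms(3) by auto
  qed simp
  also have "\<dots> = X m (2*i-1) * Y (2*i-1) n + X m (2*i) * Y (2*i) n" using assms(3) by simp
  finally show ?thesis .
qed

lemma bm_mult: "BT X \<Longrightarrow> BT Y \<Longrightarrow> 1 \<le> i \<Longrightarrow> bm (imul X Y) i = bm X i ** bm Y i"
  by (simp add: bm_def imul_diag mk_mult)

lemma bm_Rm: "1 \<le> i \<Longrightarrow> bm Rm i = mk 1 (int i) 0 1"
proof -
  assume i: "1 \<le> i"
  have b: "blk (2 * i) = i" by (simp add: blk_def)
  have a: "1 \<le> 2*i - 1" "\<not> 2*i \<le> 2*i - 1" "2*i - 1 \<le> 2*i" "2*i - (2*i - 1) = 1" "1 \<le> 2 * i"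
    using i by simp_all
  have "Rm (2*i-1) (2*i-1) = 1" "Rm (2*i-1) (2*i) = int i" "Rm (2*i) (2*i-1) = 0" "Rm (2*i) (2*i) = 1"
    unfolding Rm_def using a b by simp_all
  then show ?thesis by (simp add: bm_def)
qed

lemma bm_Phi: "1 \<le> i \<Longrightarrow> bm (Phi M) i = kap M"
proof -
  assume i: "1 \<le> i"
  have h: "blk (2 * i - 1) = i" "blk (2 * i) = i" "tp (2 * i - 1) = 2" "tp (2 * i) = 1" "1 \<le> 2 * i - 1"
    using i by (simp_all add: blk_def tp_def)
  show ?thesis unfolding bm_def Phi_def h using h(5) i by (simp add: ent_def kap_def)
qed

lemma kap_tiM_pow: "kap (tiM ^ i) = mk 1 (- int i) 0 1"
  by (induction i) (simp_all add: kap_vals kap_mult mk_mult algebra_simps)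

lemma bm_Pm: "1 \<le> i \<Longrightarrow> bm Pm i = mk 1 (- int i) 0 1"
proof -
  assume i: "1 \<le> i"
  have h: "blk (2 * i - 1) = i" "blk (2 * i) = i" using i by (simp_all add: blk_def)
  have "bm Pm i = bm (Phi (tiM ^ i)) i" unfolding bm_def Pm_def h ..
  then show ?thesis using bm_Phi[OF i] kap_tiM_pow by simp
qed

lemma bm_tau: "det Y = 1 \<Longrightarrow> 1 \<le> i \<Longrightarrow> bm (tauI Y) i = mk 1 (int i) 0 1 ** (Y ** mk 1 (- int i) 0 1)"
  by (simp add: tauI_def bm_mult BT_Rm BT_PhiP BT_Phi BT_Pm bm_Rm bm_Pm bm_Phi kap_f)



lemma catc_abs_rec: "\<bar>catc (Suc n)\<bar> \<le> (\<Sum>i\<le>n. \<bar>catc i\<bar> * \<bar>catc (n - i)\<bar>)"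
  by (simp add: abs_mult[symmetric] sum_abs)

definition xc :: "nat \<Rightarrow> real" where "xc k = \<bar>catc k\<bar> / 4 ^ k"

lemma xc_nonneg: "0 \<le> xc k" by (simp add: xc_def)

lemma xc_rec: "xc (Suc k) \<le> (1/4) * (\<Sum>i\<le>k. xc i * xc (k - i))"
proof -
  have "xc (Suc k) = \<bar>catc (Suc k)\<bar> / 4 ^ Suc k" by (simp add: xc_def)
  also have "\<dots> \<le> (\<Sum>i\<le>k. real_of_int (\<bar>catc i\<bar> * \<bar>catc (k - i)\<bar>)) / 4 ^ Suc k"
  proof (rule divide_right_mono)
    have "real_of_int \<bar>catc (Suc k)\<bar> \<le> real_of_int (\<Sum>i\<le>k. \<bar>catc i\<bar> * \<bar>catc (k - i)\<bar>)"
      using catc_abs_rec[of k] by (simp only: of_int_le_iff)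
    then show "real_of_int \<bar>catc (Suc k)\<bar> \<le> (\<Sum>i\<le>k. real_of_int (\<bar>catc i\<bar> * \<bar>catc (k - i)\<bar>))"
      by (simp only: of_int_sum)
  qed simp
  also have "\<dots> = (\<Sum>i\<le>k. real_of_int (\<bar>catc i\<bar> * \<bar>catc (k - i)\<bar>) / 4 ^ Suc k)"
    by (simp only: sum_divide_distrib)
  also have "\<dots> = (\<Sum>i\<le>k. (1/4) * (xc i * xc (k - i)))"
  proof (rule sum.cong[OF refl])
    fix i assume "i \<in> {..k}"
    then have "(4::real) ^ Suc k = 4 * (4 ^ i * 4 ^ (k - i))" by (simp add: power_add[symmetric])
    then show "real_of_int (\<bar>catc i\<bar> * \<bar>catc (k - i)\<bar>) / 4 ^ Suc k = (1/4) * (xc i * xc (k - i))"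
      by (simp add: xc_def)
  qed
  also have "\<dots> = (1/4) * (\<Sum>i\<le>k. xc i * xc (k - i))" by (simp only: sum_distrib_left)
  finally show ?thesis .
qed

lemma triangle_le:
  fixes x :: "nat \<Rightarrow> real"
  assumes "\<And>k. 0 \<le> x k"
  shows "(\<Sum>k\<le>n. \<Sum>i\<le>k. x i * x (k - i)) \<le> (\<Sum>i\<le>n. x i) * (\<Sum>j\<le>n. x j)"
proof -
  have "(\<Sum>k\<le>n. \<Sum>i\<le>k. x i * x (k - i)) = (\<Sum>(i,j)\<in>{(i,j). i + j \<le> n}. x i * x j)"
    by (rule sum.triangle_reindex_eq[symmetric])
  also have "\<dots> \<le> (\<Sum>(i,j)\<in>{..n} \<times> {..n}. x i * x j)"
    by (rule sum_mono2) (auto simp: assms)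
  also have "\<dots> = (\<Sum>i\<le>n. x i) * (\<Sum>j\<le>n. x j)"
    by (simp add: sum_product sum.cartesian_product)
  finally show ?thesis .
qed

lemma xc_sum: "(\<Sum>k\<le>n. xc k) \<le> 2"
proof (induction n)
  case 0 then show ?case by (simp add: xc_def)
next
  case (Suc n)
  have "(\<Sum>k\<le>Suc n. xc k) = xc 0 + (\<Sum>k\<le>n. xc (Suc k))" by (rule sum.atMost_Suc_shift)
  also have "\<dots> \<le> 1 + (\<Sum>k\<le>n. (1/4) * (\<Sum>i\<le>k. xc i * xc (k - i)))"
    by (intro add_mono sum_mono xc_rec) (simp add: xc_def)
  also have "\<dots> = 1 + (1/4) * (\<Sum>k\<le>n. \<Sum>i\<le>k. xc i * xc (k - i))" by (simp add: sum_distrib_left)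
  also have "\<dots> \<le> 1 + (1/4) * ((\<Sum>i\<le>n. xc i) * (\<Sum>j\<le>n. xc j))"
    using triangle_le[of xc n] xc_nonneg by simp
  also have "\<dots> \<le> 1 + (1/4) * (2 * 2)"
    using Suc.IH by (intro add_left_mono mult_left_mono mult_mono) (simp_all add: sum_nonneg xc_nonneg)
  finally show ?case by simp
qed

lemma catc_bound: "\<bar>catc n\<bar> \<le> 2 * 4 ^ n"
proof -
  have "xc n \<le> (\<Sum>k\<le>n. xc k)" by (rule member_le_sum) (simp_all add: xc_nonneg)
  then have "xc n \<le> 2" using xc_sum[of n] by simp
  then have "real_of_int \<bar>catc n\<bar> \<le> 2 * 4 ^ n" by (simp add: xc_def field_simps)
  then have "real_of_int \<bar>catc n\<bar> \<le> real_of_int (2 * 4 ^ n)" by simp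
  then show ?thesis by (simp only: of_int_le_iff)
qed

lemma cc_bound: "\<bar>fps_nth cc j\<bar> \<le> 3 * 4 ^ j"
  using catc_bound[of j] by (simp add: cc_def)

lemma bb_bound: "\<bar>fps_nth bb j\<bar> \<le> 3 * 4 ^ j"
proof (cases j)
  case 0 then show ?thesis by (simp add: bb_def)
next
  case (Suc i)
  have "\<bar>fps_nth bb j\<bar> = \<bar>catc i\<bar>" by (simp add: bb_def Suc cc_def)
  also have "\<dots> \<le> 2 * 4 ^ i" by (rule catc_bound)
  also have "\<dots> \<le> 3 * 4 ^ j" by (simp add: Suc)
  finally show ?thesis .
qed

lemma sM_ent_bound: "i \<in> {1,2} \<Longrightarrow> j \<in> {1,2} \<Longrightarrow> \<bar>fps_nth (ent sM i j) k\<bar> \<le> 3 * 4 ^ k"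
  using cc_bound[of k] bb_bound[of k] by (auto simp: ent_def sM_def)

lemma abs3: "\<bar>x + y - z\<bar> \<le> \<bar>x\<bar> + \<bar>y\<bar> + \<bar>z::int\<bar>" by arith

lemma tiM_bound: "\<bar>fps_nth (ent (tiM ^ L) i j) k\<bar> \<le> 3 ^ L"
proof (induction L arbitrary: k i j)
  case 0 then show ?case by (simp add: ent_def)
next
  case (Suc L)
  define A where "A = e11 (tiM ^ L)"
  define B where "B = e12 (tiM ^ L)"
  define C where "C = e21 (tiM ^ L)"
  define D where "D = e22 (tiM ^ L)"
  have IH: "\<bar>fps_nth A k\<bar> \<le> 3 ^ L" "\<bar>fps_nth B k\<bar> \<le> 3 ^ L" "\<bar>fps_nth C k\<bar> \<le> 3 ^ L" "\<bar>fps_nth D k\<bar> \<le> 3 ^ L" for k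
    using Suc.IH[of 1 1 k] Suc.IH[of 1 2 k] Suc.IH[of 2 1 k] Suc.IH[of 2 2 k]
    unfolding A_def B_def C_def D_def ent_def by simp_all
  have E: "e11 (tiM ^ Suc L) = (1 + XX) * A + (- XX) * C"
    "e12 (tiM ^ Suc L) = (1 + XX) * B + (- XX) * D"
    "e21 (tiM ^ Suc L) = - A + C"
    "e22 (tiM ^ Suc L) = - B + D"
    unfolding A_def B_def C_def D_def by (simp_all add: tiM_def)
  have t1: "\<bar>fps_nth ((1 + XX) * P + (- XX) * Q) k\<bar> \<le> 3 ^ Suc L"
    if "\<And>k. \<bar>fps_nth P k\<bar> \<le> 3 ^ L" "\<And>k. \<bar>fps_nth Q k\<bar> \<le> 3 ^ L" for P Q :: "int fps"
  proof -
    have "\<bar>fps_nth ((1 + XX) * P + (- XX) * Q) k\<bar> \<le> \<bar>fps_nth P k\<bar> + (if k = 0 then 0 else \<bar>fps_nth P (k - 1)\<bar>) + (if k = 0 then 0 else \<bar>fps_nth Q (k - 1)\<bar>)"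
      by (cases "k = 0") (simp_all add: nth_1X abs3)
    also have "\<dots> \<le> 3 ^ L + 3 ^ L + 3 ^ L" using that[of k] that[of "k - 1"] by (intro add_mono) auto
    finally show ?thesis by simp
  qed
  have t2: "\<bar>fps_nth (- P + Q) k\<bar> \<le> 3 ^ Suc L"
    if "\<And>k. \<bar>fps_nth P k\<bar> \<le> 3 ^ L" "\<And>k. \<bar>fps_nth Q k\<bar> \<le> 3 ^ L" for P Q :: "int fps"
  proof -
    have "\<bar>fps_nth (- P + Q) k\<bar> \<le> \<bar>fps_nth P k\<bar> + \<bar>fps_nth Q k\<bar>" by simp
    also have "\<dots> \<le> 3 ^ L + 3 ^ L" using that by (intro add_mono) auto
    finally show ?thesis by simp
  qed
  note T = t1[OF IH(1) IH(3)] t1[OF IH(2) IH(4)] t2[OF IH(1) IH(3)] t2[OF IH(2) IH(4)]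
  show ?case unfolding ent_def E[symmetric]
    using T[unfolded E[symmetric]] by (simp del: power_Suc)
qed



lemma imul_abs_le:
  assumes "\<forall>k\<in>{1..2*blk n}. \<bar>X m k\<bar> \<le> a" "\<forall>k\<in>{1..2*blk n}. \<bar>Y k n\<bar> \<le> b"
  shows "\<bar>imul X Y m n\<bar> \<le> int (2*blk n) * (a * b)"
proof -
  have "\<bar>imul X Y m n\<bar> \<le> (\<Sum>k\<in>{1..2*blk n}. \<bar>X m k * Y k n\<bar>)" unfolding imul_def by (rule sum_abs)
  also have "\<dots> \<le> (\<Sum>k\<in>{1..2*blk n}. a * b)"
  proof (rule sum_mono)
    fix k assume k: "k \<in> {1..2*blk n}"
    have "\<bar>X m k\<bar> * \<bar>Y k n\<bar> \<le> a * b"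
      using assms k by (intro mult_mono) (auto intro: order.trans[OF abs_ge_zero])
    then show "\<bar>X m k * Y k n\<bar> \<le> a * b" by (simp add: abs_mult)
  qed
  also have "\<dots> = int (2*blk n) * (a * b)" by simp
  finally show ?thesis .
qed

lemma blk_le_n: "1 \<le> n \<Longrightarrow> blk n \<le> n" unfolding blk_def by simp

lemma blk_range: "k \<in> {1..2*blk n} \<Longrightarrow> blk k \<le> blk n"
  unfolding blk_def by auto

lemma B1: "1 \<le> n \<Longrightarrow> k \<in> {1..2*blk n} \<Longrightarrow> \<bar>Rm m k\<bar> \<le> 2 ^ n"
proof -
  assume n: "1 \<le> n" and k: "k \<in> {1..2*blk n}"
  have "blk k \<le> n" using blk_range[OF k] blk_le_n[OF n] by simp
  then have "(2::nat) ^ blk k \<le> 2 ^ n" by (intro power_increasing) simp_all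
  then have "(blk k choose (k - m)) \<le> 2 ^ n"
    using binomial_le_pow2[of "blk k" "k - m"] by linarith
  then have "int (blk k choose (k - m)) \<le> 2 ^ n" by (metis of_nat_le_iff of_nat_numeral of_nat_power)
  then show ?thesis by (simp add: Rm_def)
qed

lemma B2: "1 \<le> n \<Longrightarrow> l \<in> {1..2*blk n} \<Longrightarrow> \<bar>Phi sM k l\<bar> \<le> 3 * 4 ^ n"
proof -
  assume n: "1 \<le> n" and l: "l \<in> {1..2*blk n}"
  have bl: "blk l \<le> n" using blk_range[OF l] blk_le_n[OF n] by simp
  have tp: "tp x \<in> {1,2}" for x by (simp add: tp_def)
  show ?thesis
  proof (cases "1 \<le> k \<and> 1 \<le> l \<and> blk k \<le> blk l")
    case True
    have "\<bar>Phi sM k l\<bar> \<le> 3 * 4 ^ (blk l - blk k)"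
      using True sM_ent_bound[OF tp tp] by (simp add: Phi_def)
    also have "\<dots> \<le> 3 * 4 ^ n" using bl by (simp add: power_increasing)
    finally show ?thesis .
  next
    case False then show ?thesis by (auto simp: Phi_def)
  qed
qed

lemma B3: "1 \<le> n \<Longrightarrow> \<bar>Pm l n\<bar> \<le> 3 ^ n"
proof -
  assume n: "1 \<le> n"
  have "\<bar>Pm l n\<bar> \<le> 3 ^ blk n" using tiM_bound by (simp add: Pm_def Phi_def)
  also have "\<dots> \<le> 3 ^ n" using blk_le_n[OF n] by (simp add: power_increasing)
  finally show ?thesis .
qed

lemma tauS_bound: assumes n: "1 \<le> n" shows "\<bar>tauI matS m n\<bar> \<le> 2 ^ (9 * n)"
proof -
  have f: "f matS = sM" by (simp add: matS f_S_val)
  have c: "int (2 * blk n) \<le> 2 ^ n"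
  proof -
    have "2 * blk n \<le> n + 1" unfolding blk_def by simp
    also have "n + 1 \<le> 2 ^ n"
    proof -
      have "n < (2::nat) ^ n" by (rule less_exp)
      then show ?thesis by (simp add: Suc_le_eq)
    qed
    finally show ?thesis by (metis of_nat_le_iff of_nat_numeral of_nat_power)
  qed
  have inner: "\<bar>imul (Phi sM) Pm k n\<bar> \<le> int (2 * blk n) * (3 * 4 ^ n * 3 ^ n)" for k
    using B2[OF n] B3[OF n] by (intro imul_abs_le) auto
  have "\<bar>tauI matS m n\<bar> \<le> int (2 * blk n) * (2 ^ n * (int (2 * blk n) * (3 * 4 ^ n * 3 ^ n)))"
    unfolding tauI_def f using B1[OF n] inner by (intro imul_abs_le) auto
  also have "\<dots> \<le> 2 ^ n * (2 ^ n * (2 ^ n * (2 ^ (4 * n) * 2 ^ (2 * n))))"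
  proof -
    have a2: "3 * 4 ^ n \<le> (2::int) ^ (4 * n)"
    proof -
      have "(3::int) * 4 ^ n \<le> 4 * 4 ^ n" by simp
      also have "\<dots> = 2 ^ (2 * n + 2)" by (simp add: power_mult power_add)
      also have "\<dots> \<le> 2 ^ (4 * n)" using n by (intro power_increasing) auto
      finally show ?thesis .
    qed
    have a3: "(3::int) ^ n \<le> 2 ^ (2 * n)"
    proof -
      have "(3::int) ^ n \<le> 4 ^ n" by (intro power_mono) auto
      then show ?thesis by (simp add: power_mult)
    qed
    have p: "0 \<le> (3::int) * 4 ^ n * 3 ^ n" by simp
    have q: "3 * 4 ^ n * 3 ^ n \<le> (2::int) ^ (4 * n) * 2 ^ (2 * n)"
      using a2 a3 by (intro mult_mono) auto
    have r: "int (2 * blk n) * (3 * 4 ^ n * 3 ^ n) \<le> 2 ^ n * (2 ^ (4 * n) * 2 ^ (2 * n))"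
      by (rule mult_mono[OF c q]) auto
    have s: "2 ^ n * (int (2 * blk n) * (3 * 4 ^ n * 3 ^ n)) \<le> 2 ^ n * (2 ^ n * (2 ^ (4 * n) * 2 ^ (2 * n)))"
      using r by (intro mult_left_mono) auto
    show ?thesis by (rule mult_mono[OF c s]) auto
  qed
  also have "\<dots> = 2 ^ (9 * n)" by (simp add: power_add[symmetric])
  finally show ?thesis .
qed



lemma filtE_D: "v \<in> filtE i \<Longrightarrow> v 0 = 0 \<and> (\<forall>n>2*i. v n = 0)"
  by (simp add: filtE_def spaceE_def)

lemma mat_act_sum: "v \<in> filtE i \<Longrightarrow> mat_act M v n = (\<Sum>k\<in>{1..2*i}. M n k * v k)"
proof -
  assume v: "v \<in> filtE i"
  have s: "{k. v k \<noteq> 0} \<subseteq> {1..2*i}"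
  proof
    fix k assume "k \<in> {k. v k \<noteq> 0}"
    then have vk: "v k \<noteq> 0" by simp
    have a: "k \<noteq> 0"
    proof
      assume "k = 0" then show False using vk filtE_D[OF v] by simp
    qed
    have b: "\<not> 2*i < k" using vk filtE_D[OF v] by auto
    show "k \<in> {1..2*i}" using a b by simp
  qed
  show ?thesis unfolding mat_act_def
    by (rule sum.mono_neutral_left) (use s in auto)
qed

lemma filt_pres: assumes bt: "BT X" and v: "v \<in> filtE i" shows "mat_act (cm X) v \<in> filtE i"
proof -
  have z: "mat_act (cm X) v n = 0" if "n = 0 \<or> n > 2 * i" for n
  proof -
    have "cm X n k = 0" if "k \<in> {1..2*i}" for k
    proof (rule ccontr)
      assume "cm X n k \<noteq> 0"
      then have "X n k \<noteq> 0" by (simp add: cm_def)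
      from BTD[OF bt this] have "1 \<le> n" "blk n \<le> blk k" by auto
      moreover have "blk k \<le> i" using \<open>k \<in> {1..2*i}\<close> unfolding blk_def by auto
      moreover have "n = 0 \<or> blk n > i" using \<open>n = 0 \<or> n > 2 * i\<close> unfolding blk_def by auto
      ultimately show False by auto
    qed
    then show ?thesis by (simp add: mat_act_sum[OF v])
  qed
  have "{n. mat_act (cm X) v n \<noteq> 0} \<subseteq> {0..2*i}"
  proof
    fix x assume "x \<in> {n. mat_act (cm X) v n \<noteq> 0}"
    then have "\<not> (x = 0 \<or> 2 * i < x)" using z by blast
    then show "x \<in> {0..2*i}" by simp
  qed
  then have "finite {n. mat_act (cm X) v n \<noteq> 0}" by (rule finite_subset) simp
  then show ?thesis using z by (simp add: filtE_def spaceE_def)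
qed

lemma mat_act_blk:
  assumes bt: "BT X" and v: "v \<in> filtE i" and i: "1 \<le> i" and m: "m \<in> {2*i-1, 2*i}"
  shows "mat_act (cm X) v m = cm X m (2*i-1) * v (2*i-1) + cm X m (2*i) * v (2*i)"
proof -
  have bm: "blk m = i" using m i by (auto simp: blk_def)
  have "mat_act (cm X) v m = (\<Sum>k\<in>{1..2*i}. cm X m k * v k)" by (rule mat_act_sum[OF v])
  also have "\<dots> = (\<Sum>k\<in>{2*i-1, 2*i}. cm X m k * v k)"
  proof (rule sum.mono_neutral_right)
    show "\<forall>k\<in>{1..2 * i} - {2 * i - 1, 2 * i}. cm X m k * v k = 0"
    proof
      fix k assume k: "k \<in> {1..2 * i} - {2 * i - 1, 2 * i}"
      then have "blk k < i" unfolding blk_def by auto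
      then have "X m k = 0" using BTD[OF bt, of m k] bm by auto
      then show "cm X m k * v k = 0" by (simp add: cm_def)
    qed
  qed (use i in auto)
  also have "\<dots> = cm X m (2*i-1) * v (2*i-1) + cm X m (2*i) * v (2*i)" using i by simp
  finally show ?thesis .
qed

definition psi :: "nat \<Rightarrow> vect \<Rightarrow> complex^2" where
  "psi i v = vector [v (2*i-1) - of_nat i * v (2*i), v (2*i)]"

lemma psi_nth: "psi i v $ 1 = v (2*i-1) - of_nat i * v (2*i)" "psi i v $ 2 = v (2*i)"
  by (simp_all add: psi_def)

lemma tau_entries:
  assumes "det Y = 1" "1 \<le> i"
  shows "tauI Y (2*i-1) (2*i-1) = Y$1$1 + int i * Y$2$1"
    "tauI Y (2*i-1) (2*i) = (Y$1$2 - Y$1$1 * int i) + int i * (Y$2$2 - Y$2$1 * int i)"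
    "tauI Y (2*i) (2*i-1) = Y$2$1"
    "tauI Y (2*i) (2*i) = Y$2$2 - Y$2$1 * int i"
proof -
  obtain a b c d where Y: "Y = mk a b c d" using mk_eta by blast
  have "bm (tauI Y) i = mk (a + int i * c) ((b - a * int i) + int i * (d - c * int i)) c (d - c * int i)"
    using bm_tau[OF assms] by (simp add: Y mk_mult algebra_simps)
  then show "tauI Y (2*i-1) (2*i-1) = Y$1$1 + int i * Y$2$1"
    "tauI Y (2*i-1) (2*i) = (Y$1$2 - Y$1$1 * int i) + int i * (Y$2$2 - Y$2$1 * int i)"
    "tauI Y (2*i) (2*i-1) = Y$2$1"
    "tauI Y (2*i) (2*i) = Y$2$2 - Y$2$1 * int i"
    by (simp_all add: bm_def mk_eq_iff Y)
qed

lemma std_act_nth: "std_act Y w $ 1 = of_int (Y$1$1) * w$1 + of_int (Y$1$2) * w$2"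
  "std_act Y w $ 2 = of_int (Y$2$1) * w$1 + of_int (Y$2$2) * w$2"
  by (simp_all add: std_act_def matrix_vector_mult_def sum_2)

lemma psi_equiv:
  assumes Y: "det Y = 1" and i: "1 \<le> i" and v: "v \<in> filtE i"
  shows "psi i (mat_act (cm (tauI Y)) v) = std_act Y (psi i v)"
proof -
  have m1: "2*i-1 \<in> {2*i-1, 2*i}" and m2: "2*i \<in> {2*i-1, 2*i}" by simp_all
  note A1 = mat_act_blk[OF BT_tauI v i m1] and A2 = mat_act_blk[OF BT_tauI v i m2]
  note E = tau_entries[OF Y i]
  show ?thesis
    unfolding vec_eq_iff forall_2 psi_nth std_act_nth A1 A2
    unfolding cm_def E
    by (simp add: algebra_simps)
qed

lemma psi_lin: "psi i (\<lambda>n. a * u n + b * v n) = a *s psi i u + b *s psi i v"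
  by (simp add: vec_eq_iff forall_2 psi_nth algebra_simps)

lemma psi_surj: assumes i: "1 \<le> i" shows "psi i ` filtE i = UNIV"
proof (rule set_eqI, rule iffI)
  fix w :: "complex^2"
  define v where "v n = (if n = 2*i-1 then w$1 + of_nat i * w$2 else if n = 2*i then w$2 else 0)" for n
  have "finite {n. v n \<noteq> 0}" by (rule finite_subset[of _ "{2*i-1, 2*i}"]) (auto simp: v_def)
  moreover have "v 0 = 0" "\<forall>n>2*i. v n = 0" using i by (auto simp: v_def)
  ultimately have "v \<in> filtE i" by (simp add: filtE_def spaceE_def)
  moreover have "psi i v = w"
  proof -
    have ne: "2*i \<noteq> 2*i - 1" using i by simp
    show ?thesis using ne by (simp add: vec_eq_iff forall_2 psi_nth v_def)
  qed
  ultimately show "w \<in> psi i ` filtE i" by blast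
qed simp

lemma psi_ker: assumes i: "1 \<le> i" shows "{v\<in>filtE i. psi i v = 0} = filtE (i - 1)"
proof (rule set_eqI)
  fix v
  show "v \<in> {v\<in>filtE i. psi i v = 0} \<longleftrightarrow> v \<in> filtE (i - 1)"
  proof
    assume h: "v \<in> {v\<in>filtE i. psi i v = 0}"
    then have "v (2*i) = 0" "v (2*i-1) = 0" by (auto simp: vec_eq_iff forall_2 psi_nth)
    moreover have "v \<in> spaceE" "\<forall>n>2*i. v n = 0" using h by (auto simp: filtE_def)
    ultimately have "\<forall>n>2*(i-1). v n = 0"
    proof (intro allI impI)
      fix n assume n: "n > 2 * (i - 1)"
      have "n = 2*i-1 \<or> n = 2*i \<or> n > 2*i" using n i by linarith
      then show "v n = 0" using \<open>v (2*i) = 0\<close> \<open>v (2*i-1) = 0\<close> \<open>\<forall>n>2*i. v n = 0\<close> by auto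
    qed
    then show "v \<in> filtE (i - 1)" using \<open>v \<in> spaceE\<close> by (simp add: filtE_def)
  next
    assume h: "v \<in> filtE (i - 1)"
    then have "v (2*i) = 0" "v (2*i-1) = 0" using i by (auto simp: filtE_def)
    moreover have "v \<in> filtE i" using h by (auto simp: filtE_def)
    ultimately show "v \<in> {v\<in>filtE i. psi i v = 0}" by (simp add: vec_eq_iff forall_2 psi_nth)
  qed
qed



lemma adj_inv: assumes "det X = 1"
  shows "X ** mk (X$2$2) (- X$1$2) (- X$2$1) (X$1$1) = mk 1 0 0 1"
    "mk (X$2$2) (- X$1$2) (- X$2$1) (X$1$1) ** X = mk 1 0 0 1"
    "det (mk (X$2$2) (- X$1$2) (- X$2$1) (X$1$1)) = 1"
proof -
  obtain a b c d where X: "X = mk a b c d" using mk_eta by blast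
  have d: "a * d - b * c = 1" using assms by (simp add: X mk_det)
  show "X ** mk (X$2$2) (- X$1$2) (- X$2$1) (X$1$1) = mk 1 0 0 1"
    "mk (X$2$2) (- X$1$2) (- X$2$1) (X$1$1) ** X = mk 1 0 0 1"
    "det (mk (X$2$2) (- X$1$2) (- X$2$1) (X$1$1)) = 1"
    using d by (simp_all add: X mk_mult mk_det algebra_simps)
qed

theorem theorem5p1:
  shows "\<exists>\<tau> :: int^2^2 \<Rightarrow> mat.
    (\<forall>X\<in>SL2Z. \<tau> X \<in> unitsA) \<and>
    (\<forall>X\<in>SL2Z. \<forall>Y\<in>SL2Z. \<tau> (X ** Y) = \<tau> X \<star> \<tau> Y) \<and>
    (\<forall>i. \<forall>Y\<in>SL2Z. \<forall>v\<in>filtE i. mat_act (\<tau> Y) v \<in> filtE i) \<and>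
    (\<forall>i\<ge>1. \<exists>\<psi> :: vect \<Rightarrow> complex^2.
        (\<forall>u\<in>filtE i. \<forall>v\<in>filtE i. \<forall>a b. \<psi> (\<lambda>n. a * u n + b * v n) = a *s \<psi> u + b *s \<psi> v) \<and>
        \<psi> ` filtE i = UNIV \<and>
        {v\<in>filtE i. \<psi> v = 0} = filtE (i - 1) \<and>
        (\<forall>Y\<in>SL2Z. \<forall>v\<in>filtE i. \<psi> (mat_act (\<tau> Y) v) = std_act Y (\<psi> v))) \<and>
    \<tau> matT = J_inf \<and>
    (\<forall>Y\<in>SL2Z. \<forall>i j. \<tau> Y i j \<in> \<int>) \<and>
    (\<exists>C::real. \<forall>i\<ge>1. \<forall>j\<ge>1. norm (\<tau> matS i j) \<le> 2 powr (C * real j))"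
proof (intro exI[of _ "\<lambda>Y. cm (tauI Y)"] conjI ballI allI impI)
  fix X assume X: "X \<in> SL2Z"
  then have dX: "det X = 1" by (simp add: SL2Z_def)
  let ?A = "mk (X$2$2) (- X$1$2) (- X$2$1) (X$1$1)"
  note ai = adj_inv[OF dX]
  have "cm (tauI X) \<star> cm (tauI ?A) = mat_id"
    by (simp add: cm_mult BT_tauI tauI_hom[OF dX ai(3), symmetric] ai(1) tauI_I cm_iid)
  moreover have "cm (tauI ?A) \<star> cm (tauI X) = mat_id"
    by (simp add: cm_mult BT_tauI tauI_hom[OF ai(3) dX, symmetric] ai(2) tauI_I cm_iid)
  ultimately show "cm (tauI X) \<in> unitsA"
    unfolding unitsA_def using cm_ringA[OF BT_tauI] by blast
next
  fix X Y assume "X \<in> SL2Z" "Y \<in> SL2Z"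
  then have "det X = 1" "det Y = 1" by (simp_all add: SL2Z_def)
  then show "cm (tauI (X ** Y)) = cm (tauI X) \<star> cm (tauI Y)"
    by (simp add: cm_mult BT_tauI tauI_hom)
next
  fix i Y v assume "Y \<in> SL2Z" "v \<in> filtE i"
  then show "mat_act (cm (tauI Y)) v \<in> filtE i" by (intro filt_pres BT_tauI)
next
  fix i :: nat assume i: "1 \<le> i"
  show "\<exists>\<psi> :: vect \<Rightarrow> complex^2.
        (\<forall>u\<in>filtE i. \<forall>v\<in>filtE i. \<forall>a b. \<psi> (\<lambda>n. a * u n + b * v n) = a *s \<psi> u + b *s \<psi> v) \<and>
        \<psi> ` filtE i = UNIV \<and>
        {v\<in>filtE i. \<psi> v = 0} = filtE (i - 1) \<and>
        (\<forall>Y\<in>SL2Z. \<forall>v\<in>filtE i. \<psi> (mat_act (cm (tauI Y)) v) = std_act Y (\<psi> v))"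
    using psi_lin psi_surj[OF i] psi_ker[OF i] psi_equiv[OF _ i]
    by (intro exI[of _ "psi i"]) (auto simp: SL2Z_def)
next
  show "cm (tauI matT) = J_inf"
    by (intro ext) (auto simp: matT tauI_T cm_def iid_def Nsh_def J_inf_def)
next
  fix Y i j assume "Y \<in> SL2Z"
  show "cm (tauI Y) i j \<in> \<int>" by (simp add: cm_def)
next
  show "\<exists>C::real. \<forall>i\<ge>1. \<forall>j\<ge>1. norm (cm (tauI matS) i j) \<le> 2 powr (C * real j)"
  proof (intro exI[of _ 9] allI impI)
    fix i j :: nat assume "1 \<le> i" "1 \<le> j"
    have "\<bar>tauI matS i j\<bar> \<le> 2 ^ (9 * j)" by (rule tauS_bound) fact
    then have "real_of_int \<bar>tauI matS i j\<bar> \<le> real_of_int (2 ^ (9 * j))" by (simp only: of_int_le_iff)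
    moreover have "(2::real) powr (9 * real j) = 2 ^ (9 * j)"
      using powr_realpow[of 2 "9 * j"] by simp
    ultimately show "norm (cm (tauI matS) i j) \<le> 2 powr (9 * real j)" by (simp add: cm_def)
  qed
qed


end
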